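(* Let $\alpha>1+d$ be an integer and $b$ an integer with $1\le b<\alpha-d$. Then there exist constants $c_1,c_2>0$ such that for every $r>0$, $$\tilde\Pi\big(F:\|F\|_{C^b(\mathbb R^d)}\ge r\big)\le c_1e^{-c_2r}.$$
   Context: $\mathcal O\subset\mathbb R^d$ nonempty bounded open with smooth boundary; $\{\psi_{kl}:k\ge1,1\le l\le L_k\}$ are the elements of an orthonormal basis of $L^2(\mathbb R^d)$ of compactly supported Daubechies wavelets (regularity $S>\alpha$) whose supports meet $\mathcal O$, $L_k\simeq2^{dk}$; $\tilde\Pi$ is the law of $\tilde F=\sum_{k,l}2^{(d/2-\alpha)k}\xi_{kl}\psi_{kl}$ with i.i.d. standard Laplace $\xi_{kl}$. $\|F\|_{C^b(\mathbb R^d)}$ is the sum of sup-norms of the derivatives of order at most $b$. *)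

theory Defs
  imports "HOL-Probability.Probability"
begin

definition pdiff :: "'n::finite \<Rightarrow> (real^'n \<Rightarrow> real) \<Rightarrow> real^'n \<Rightarrow> real" where
  "pdiff i f x = deriv (\<lambda>t. f (x + t *\<^sub>R axis i 1)) 0"

fun pdiffs :: "'n::finite list \<Rightarrow> (real^'n \<Rightarrow> real) \<Rightarrow> real^'n \<Rightarrow> real" where
  "pdiffs [] f = f"
| "pdiffs (i # is) f = pdiff i (pdiffs is f)"

definition Ck_on :: "(real^'n::finite) set \<Rightarrow> nat \<Rightarrow> (real^'n \<Rightarrow> real) \<Rightarrow> bool" where
  "Ck_on U k f \<longleftrightarrow>
     (\<forall>is. length is < k \<longrightarrow>
        (\<forall>i. \<forall>x\<in>U. (\<lambda>t. pdiffs is f (x + t *\<^sub>R axis i 1)) field_differentiable (at 0))) \<and>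
     (\<forall>is. length is \<le> k \<longrightarrow> continuous_on U (pdiffs is f))"

definition mlist :: "('n::finite \<Rightarrow> nat) \<Rightarrow> 'n list" where
  "mlist \<beta> = (SOME xs. \<forall>i. count_list xs i = \<beta> i)"

definition Dmulti :: "('n::finite \<Rightarrow> nat) \<Rightarrow> (real^'n \<Rightarrow> real) \<Rightarrow> real^'n \<Rightarrow> real" where
  "Dmulti \<beta> f = pdiffs (mlist \<beta>) f"

definition Cb_norm :: "nat \<Rightarrow> (real^'n::finite \<Rightarrow> real) \<Rightarrow> ereal" where
  "Cb_norm b f =
     (if Ck_on UNIV b f
      then (\<Sum>\<beta>\<in>{\<beta>::'n\<Rightarrow>nat. (\<Sum>i\<in>UNIV. \<beta> i) \<le> b}. (SUP x. ereal \<bar>Dmulti \<beta> f x\<bar>))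
      else \<infinity>)"

definition smooth_boundary :: "(real^'n::finite) set \<Rightarrow> bool" where
  "smooth_boundary Dom \<longleftrightarrow>
     (\<forall>p\<in>frontier Dom. \<exists>U g. open U \<and> p \<in> U \<and> (\<forall>k. Ck_on U k g) \<and>
        (\<forall>x\<in>U. \<exists>i. pdiff i g x \<noteq> 0) \<and> Dom \<inter> U = {x\<in>U. g x < 0})"

definition C1d :: "nat \<Rightarrow> (real \<Rightarrow> real) \<Rightarrow> bool" where
  "C1d S f \<longleftrightarrow> (\<forall>j<S. \<forall>t. (deriv ^^ j) f field_differentiable (at t))
                 \<and> continuous_on UNIV ((deriv ^^ S) f)"

text \<open>Tensor product generator: eps i selects the mother wavelet psi (True) or the
  father wavelet phi (False) in coordinate i.\<close>
definition tensor_gen :: "(real \<Rightarrow> real) \<Rightarrow> (real \<Rightarrow> real) \<Rightarrow> ('n::finite \<Rightarrow> bool)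
                            \<Rightarrow> real^'n \<Rightarrow> real" where
  "tensor_gen \<phi> \<psi> \<epsilon> x = (\<Prod>i\<in>UNIV. (if \<epsilon> i then \<psi> else \<phi>) (x $ i))"

definition wav :: "(real \<Rightarrow> real) \<Rightarrow> (real \<Rightarrow> real) \<Rightarrow> nat \<Rightarrow> ('n::finite \<Rightarrow> bool)
                     \<Rightarrow> ('n \<Rightarrow> int) \<Rightarrow> real^'n \<Rightarrow> real" where
  "wav \<phi> \<psi> j \<epsilon> m x =
     2 powr (real CARD('n) * real j / 2) * tensor_gen \<phi> \<psi> \<epsilon> (\<chi> i. 2 ^ j * x $ i - of_int (m i))"

text \<open>Index set of the full system: level 0 contains all types (father functions and
  level-0 wavelets), higher levels only the genuine wavelets (eps not identically False).\<close>
definition wav_system_index :: "(nat \<times> ('n::finite \<Rightarrow> bool) \<times> ('n \<Rightarrow> int)) set" where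
  "wav_system_index = {(j, \<epsilon>, m). j = 0 \<or> (\<exists>i. \<epsilon> i)}"

definition wel :: "(real \<Rightarrow> real) \<Rightarrow> (real \<Rightarrow> real) \<Rightarrow> nat \<times> ('n::finite \<Rightarrow> bool) \<times> ('n \<Rightarrow> int)
                     \<Rightarrow> real^'n \<Rightarrow> real" where
  "wel \<phi> \<psi> a = (case a of (j, \<epsilon>, m) \<Rightarrow> wav \<phi> \<psi> j \<epsilon> m)"

definition ONB_L2 :: "(real \<Rightarrow> real) \<Rightarrow> (real \<Rightarrow> real) \<Rightarrow> 'n::finite itself \<Rightarrow> bool" where
  "ONB_L2 \<phi> \<psi> _ \<longleftrightarrow>
     (\<forall>a\<in>(wav_system_index :: (nat \<times> ('n \<Rightarrow> bool) \<times> ('n \<Rightarrow> int)) set).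
      \<forall>c\<in>wav_system_index.
        integrable lborel (\<lambda>x. wel \<phi> \<psi> a x * wel \<phi> \<psi> c x) \<and>
        (LINT x|lborel. wel \<phi> \<psi> a x * wel \<phi> \<psi> c x) = (if a = c then 1 else 0)) \<and>
     (\<forall>f::real^'n \<Rightarrow> real. f \<in> borel_measurable lborel \<and> integrable lborel (\<lambda>x. (f x)\<^sup>2) \<and>
        (\<forall>a\<in>(wav_system_index :: (nat \<times> ('n \<Rightarrow> bool) \<times> ('n \<Rightarrow> int)) set).
           (LINT x|lborel. f x * wel \<phi> \<psi> a x) = 0)
        \<longrightarrow> (AE x in lborel. f x = 0))"

definition cs_wavelet_basis :: "nat \<Rightarrow> (real \<Rightarrow> real) \<Rightarrow> (real \<Rightarrow> real) \<Rightarrow> 'n::finite itself \<Rightarrow> bool" where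
  "cs_wavelet_basis S \<phi> \<psi> n \<longleftrightarrow>
     bounded {t. \<phi> t \<noteq> 0} \<and> bounded {t. \<psi> t \<noteq> 0} \<and> C1d S \<phi> \<and> C1d S \<psi> \<and> ONB_L2 \<phi> \<psi> n"

text \<open>Level k \<ge> 1 of the basis corresponds to dilation j = k - 1 (level 1 also contains
  the father functions). l = (eps, m) ranges over those elements whose support meets Dom.\<close>
definition wav_index :: "(real^'n::finite) set \<Rightarrow> (real \<Rightarrow> real) \<Rightarrow> (real \<Rightarrow> real) \<Rightarrow> nat
                          \<Rightarrow> (('n \<Rightarrow> bool) \<times> ('n \<Rightarrow> int)) set" where
  "wav_index Dom \<phi> \<psi> k = {(\<epsilon>, m). (k = 1 \<or> (\<exists>i. \<epsilon> i)) \<and>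
                              closure {x. wav \<phi> \<psi> (k - 1) \<epsilon> m x \<noteq> 0} \<inter> Dom \<noteq> {}}"

definition coef_index :: "(real^'n::finite) set \<Rightarrow> (real \<Rightarrow> real) \<Rightarrow> (real \<Rightarrow> real)
                           \<Rightarrow> (nat \<times> ('n \<Rightarrow> bool) \<times> ('n \<Rightarrow> int)) set" where
  "coef_index Dom \<phi> \<psi> = Sigma {1..} (wav_index Dom \<phi> \<psi>)"

definition laplace :: "real measure" where
  "laplace = density lborel (\<lambda>x. ennreal (exp (- \<bar>x\<bar>) / 2))"

definition coef_law :: "(real^'n::finite) set \<Rightarrow> (real \<Rightarrow> real) \<Rightarrow> (real \<Rightarrow> real)
                        \<Rightarrow> (nat \<times> ('n \<Rightarrow> bool) \<times> ('n \<Rightarrow> int) \<Rightarrow> real) measure" where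
  "coef_law Dom \<phi> \<psi> = PiM (coef_index Dom \<phi> \<psi>) (\<lambda>_. laplace)"

definition Ftilde :: "real \<Rightarrow> (real^'n::finite) set \<Rightarrow> (real \<Rightarrow> real) \<Rightarrow> (real \<Rightarrow> real)
                      \<Rightarrow> (nat \<times> ('n \<Rightarrow> bool) \<times> ('n \<Rightarrow> int) \<Rightarrow> real) \<Rightarrow> real^'n \<Rightarrow> real" where
  "Ftilde \<alpha> Dom \<phi> \<psi> \<xi> x =
     (\<Sum>k. \<Sum>(\<epsilon>, m)\<in>wav_index Dom \<phi> \<psi> (Suc k).
        2 powr ((real CARD('n) / 2 - \<alpha>) * real (Suc k)) * \<xi> (Suc k, \<epsilon>, m) * wav \<phi> \<psi> k \<epsilon> m x)"

end

theory Submission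
  imports Defs
begin

lemma line_nth: "(x + t *\<^sub>R axis i (1::real)) $ j = x $ j + (if j = i then t else 0)"
  by (simp add: axis_def)

lemma line_shift: "x + (t + s) *\<^sub>R axis i (1::real) = (x + t *\<^sub>R axis i 1) + s *\<^sub>R axis i 1"
  by (simp add: algebra_simps scaleR_add_left)

lemma DERIV_shift0:
  "((\<lambda>s. h (t + s)) has_field_derivative y) (at 0) \<longleftrightarrow> (h has_field_derivative y) (at (t::real))"
proof -
  have "(\<lambda>s. h (t + s)) = (\<lambda>s. h (s + t))" by (simp add: add.commute)
  then show ?thesis using DERIV_shift[of h y 0 t] by simp
qed

lemma deriv_shift0: "deriv (\<lambda>s. h (t + s)) 0 = deriv h (t::real)"
  unfolding deriv_def using DERIV_shift0[of h t] by simp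

lemma fd_shift0: "(\<lambda>s. h (t + s)) field_differentiable (at 0) \<longleftrightarrow> h field_differentiable (at (t::real))"
  unfolding field_differentiable_def using DERIV_shift0[of h t] by simp

lemma pdiff_line: "pdiff i f (x + t *\<^sub>R axis i 1) = deriv (\<lambda>s. f (x + s *\<^sub>R axis i 1)) t"
proof -
  have "pdiff i f (x + t *\<^sub>R axis i 1) = deriv (\<lambda>s. (\<lambda>u. f (x + u *\<^sub>R axis i 1)) (t + s)) 0"
    unfolding pdiff_def by (simp add: line_shift)
  then show ?thesis using deriv_shift0[of "\<lambda>u. f (x + u *\<^sub>R axis i 1)" t] by simp
qed

lemma line_fd:
  assumes "\<forall>i x. (\<lambda>t. g (x + t *\<^sub>R axis i 1)) field_differentiable (at 0)"
  shows "(\<lambda>s. g (x + s *\<^sub>R axis i (1::real))) field_differentiable (at t)"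
proof -
  have "(\<lambda>s. g ((x + t *\<^sub>R axis i 1) + s *\<^sub>R axis i 1)) field_differentiable (at 0)"
    using assms by blast
  then have "(\<lambda>s. (\<lambda>u. g (x + u *\<^sub>R axis i 1)) (t + s)) field_differentiable (at 0)"
    by (simp add: line_shift)
  then show ?thesis using fd_shift0[of "\<lambda>u. g (x + u *\<^sub>R axis i 1)" t] by simp
qed

lemma line_deriv:
  assumes "\<forall>i x. (\<lambda>t. g (x + t *\<^sub>R axis i 1)) field_differentiable (at 0)"
  shows "((\<lambda>s. g (x + s *\<^sub>R axis i (1::real))) has_field_derivative pdiff i g (x + t *\<^sub>R axis i 1)) (at t)"
  using line_fd[OF assms, of x i t] by (simp add: pdiff_line DERIV_deriv_iff_field_differentiable)

section \<open>Series\<close>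

lemma Ck_onD1: "Ck_on UNIV b f \<Longrightarrow> length js < b \<Longrightarrow>
    \<forall>i x. (\<lambda>t. pdiffs js f (x + t *\<^sub>R axis i 1)) field_differentiable (at 0)"
  unfolding Ck_on_def by blast

lemma Ck_onD2: "Ck_on UNIV b f \<Longrightarrow> length js \<le> b \<Longrightarrow> continuous_on UNIV (pdiffs js f)"
  unfolding Ck_on_def by blast

context
  fixes u :: "nat \<Rightarrow> (real^'n::finite) \<Rightarrow> real" and M :: "nat \<Rightarrow> real" and b :: nat
  assumes C: "\<And>k. Ck_on UNIV b (u k)"
    and bnd: "\<And>k (js::'n list) (x::real^'n). length js \<le> b \<Longrightarrow> \<bar>pdiffs js (u k) x\<bar> \<le> M k"
    and sM: "summable M"
begin
lemma series_line_deriv: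
  assumes len: "length js < b"
  shows "((\<lambda>t. \<Sum>k. pdiffs js (u k) (x + t *\<^sub>R axis i 1)) has_field_derivative
            (\<Sum>k. pdiffs (i # js) (u k) x)) (at 0)"
proof -
  define g where "g k t = pdiffs js (u k) (x + t *\<^sub>R axis i 1)" for k t
  define g' where "g' k t = pdiffs (i # js) (u k) (x + t *\<^sub>R axis i 1)" for k t
  have d: "(g k has_field_derivative g' k t) (at t within UNIV)" for k t
    unfolding g_def g'_def using line_deriv[OF Ck_onD1[OF C len], where x=x and i=i and t=t] by simp
  have uc: "uniformly_convergent_on UNIV (\<lambda>n t. \<Sum>k<n. g' k t)"
    by (rule Weierstrass_m_test'[where M = M]) (use bnd[of "i # js"] len sM in \<open>auto simp: g'_def\<close>)
  have s0: "summable (\<lambda>n. g n 0)"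
    by (rule summable_comparison_test[OF _ sM]) (use bnd len in \<open>auto intro!: exI[of _ 0] simp: g_def\<close>)
  have "((\<lambda>t. \<Sum>n. g n t) has_field_derivative (\<Sum>n. g' n 0)) (at 0)"
    by (rule has_field_derivative_series'(2)[OF convex_UNIV d uc _ s0]) auto
  then show ?thesis by (simp add: g_def g'_def)
qed

lemma pdiffs_series_eq:
  shows "length js \<le> b \<Longrightarrow> pdiffs js (\<lambda>x. \<Sum>k. u k x) = (\<lambda>x. \<Sum>k. pdiffs js (u k) x)"
proof (induction js)
  case Nil
  then show ?case by simp
next
  case (Cons i js)
  then have len: "length js < b" by simp
  have "pdiffs (i # js) (\<lambda>x. \<Sum>k. u k x) x = (\<Sum>k. pdiffs (i # js) (u k) x)" for x
  proof -
    have "pdiffs (i # js) (\<lambda>x. \<Sum>k. u k x) x = pdiff i (\<lambda>x. \<Sum>k. pdiffs js (u k) x) x"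
      using Cons by simp
    also have "\<dots> = (\<Sum>k. pdiffs (i # js) (u k) x)"
      unfolding pdiff_def by (rule DERIV_imp_deriv[OF series_line_deriv[OF len]])
    finally show ?thesis .
  qed
  then show ?case by auto
qed

lemma pdiffs_series:
  shows pdiffs_series_Ck: "Ck_on UNIV b (\<lambda>x. \<Sum>k. u k x)"
    and pdiffs_series_bnd: "\<And>(js::'n list) (x::real^'n). length js \<le> b \<Longrightarrow> \<bar>pdiffs js (\<lambda>x. \<Sum>k. u k x) x\<bar> \<le> (\<Sum>k. M k)"
proof -
  note eq = pdiffs_series_eq
  show "\<bar>pdiffs js (\<lambda>x. \<Sum>k. u k x) x\<bar> \<le> (\<Sum>k. M k)" if len: "length js \<le> b" for js :: "'n list" and x
  proof -
    have sa: "summable (\<lambda>k. \<bar>pdiffs js (u k) x\<bar>)"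
      by (rule summable_comparison_test[OF _ sM]) (use bnd len in auto)
    have "\<bar>\<Sum>k. pdiffs js (u k) x\<bar> \<le> (\<Sum>k. \<bar>pdiffs js (u k) x\<bar>)"
      using summable_rabs[OF sa] by blast
    also have "\<dots> \<le> (\<Sum>k. M k)"
      by (rule suminf_le) (use bnd len sa sM in auto)
    finally show ?thesis using eq[OF len] by simp
  qed
  show "Ck_on UNIV b (\<lambda>x. \<Sum>k. u k x)"
    unfolding Ck_on_def
  proof (intro conjI allI impI ballI)
    fix js :: "'n list" and i x assume len: "length js < b"
    have "((\<lambda>t. \<Sum>k. pdiffs js (u k) (x + t *\<^sub>R axis i 1)) has_field_derivative
            (\<Sum>k. pdiffs (i # js) (u k) x)) (at 0)"
      by (rule series_line_deriv[OF len])
    then show "(\<lambda>t. pdiffs js (\<lambda>x. \<Sum>k. u k x) (x + t *\<^sub>R axis i 1)) field_differentiable (at 0)"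
      using eq[of js] len unfolding field_differentiable_def by auto
  next
    fix js :: "'n list" assume len: "length js \<le> b"
    have ul: "uniform_limit UNIV (\<lambda>n x. \<Sum>k<n. pdiffs js (u k) x) (\<lambda>x. \<Sum>k. pdiffs js (u k) x) sequentially"
      by (rule Weierstrass_m_test[where M = M]) (use bnd len sM in auto)
    have "continuous_on UNIV (\<lambda>x. \<Sum>k. pdiffs js (u k) x)"
      by (rule uniform_limit_theorem[OF _ ul])
         (auto intro!: always_eventually continuous_on_sum Ck_onD2[OF C len])
    then show "continuous_on UNIV (pdiffs js (\<lambda>x. \<Sum>k. u k x))"
      using eq[OF len] by simp
  qed
qed

end

section \<open>Finite sums\<close>

lemma pdiffs_sum:
  fixes f :: "'a \<Rightarrow> (real^'n::finite) \<Rightarrow> real"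
  assumes A: "finite A" and C: "\<And>a. a \<in> A \<Longrightarrow> Ck_on UNIV b (f a)"
  shows "\<And>js::'n list. length js \<le> b \<Longrightarrow> pdiffs js (\<lambda>x. \<Sum>a\<in>A. f a x) = (\<lambda>x. \<Sum>a\<in>A. pdiffs js (f a) x)"
    and "Ck_on UNIV b (\<lambda>x. \<Sum>a\<in>A. f a x)"
proof -
  have core: "((\<lambda>t. \<Sum>a\<in>A. pdiffs js (f a) (x + t *\<^sub>R axis i 1)) has_field_derivative
            (\<Sum>a\<in>A. pdiffs (i # js) (f a) x)) (at 0)" if len: "length js < b" for js :: "'n list" and i x
  proof (rule DERIV_sum)
    fix a assume a: "a \<in> A"
    have "(\<lambda>t. pdiffs js (f a) (x + t *\<^sub>R axis i 1)) field_differentiable (at 0)"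
      using Ck_onD1[OF C[OF a] len] by blast
    then show "((\<lambda>t. pdiffs js (f a) (x + t *\<^sub>R axis i 1)) has_field_derivative pdiffs (i # js) (f a) x) (at 0)"
      by (simp add: pdiff_def DERIV_deriv_iff_field_differentiable[symmetric])
  qed
  have eq: "pdiffs js (\<lambda>x. \<Sum>a\<in>A. f a x) = (\<lambda>x. \<Sum>a\<in>A. pdiffs js (f a) x)" if "length js \<le> b" for js :: "'n list"
    using that
  proof (induction js)
    case Nil
    then show ?case by simp
  next
    case (Cons i js)
    then have len: "length js < b" by simp
    have "pdiffs (i # js) (\<lambda>x. \<Sum>a\<in>A. f a x) x = (\<Sum>a\<in>A. pdiffs (i # js) (f a) x)" for x
    proof -
      have "pdiffs (i # js) (\<lambda>x. \<Sum>a\<in>A. f a x) x = pdiff i (\<lambda>x. \<Sum>a\<in>A. pdiffs js (f a) x) x"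
        using Cons by simp
      also have "\<dots> = (\<Sum>a\<in>A. pdiffs (i # js) (f a) x)"
        unfolding pdiff_def by (rule DERIV_imp_deriv[OF core[OF len]])
      finally show ?thesis .
    qed
    then show ?case by auto
  qed
  then show "\<And>js::'n list. length js \<le> b \<Longrightarrow> pdiffs js (\<lambda>x. \<Sum>a\<in>A. f a x) = (\<lambda>x. \<Sum>a\<in>A. pdiffs js (f a) x)" .
  show "Ck_on UNIV b (\<lambda>x. \<Sum>a\<in>A. f a x)"
    unfolding Ck_on_def
  proof (intro conjI allI impI ballI)
    fix js :: "'n list" and i x assume len: "length js < b"
    then show "(\<lambda>t. pdiffs js (\<lambda>x. \<Sum>a\<in>A. f a x) (x + t *\<^sub>R axis i 1)) field_differentiable (at 0)"
      using core[OF len, of x i] eq[of js] unfolding field_differentiable_def by auto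
  next
    fix js :: "'n list" assume len: "length js \<le> b"
    then show "continuous_on UNIV (pdiffs js (\<lambda>x. \<Sum>a\<in>A. f a x))"
      using eq[OF len] by (auto intro!: continuous_on_sum Ck_onD2[OF C])
  qed
qed

lemma pdiff_prod_line:
  fixes G :: "'n::finite \<Rightarrow> real \<Rightarrow> real"
  assumes "G i field_differentiable (at (x $ i))"
  shows "((\<lambda>t. c * (\<Prod>j\<in>UNIV. G j ((x + t *\<^sub>R axis i 1) $ j))) has_field_derivative
          c * (\<Prod>j\<in>UNIV. (if j = i then deriv (G j) else G j) (x $ j))) (at 0)"
proof -
  have e1: "(\<Prod>j\<in>UNIV. G j ((x + t *\<^sub>R axis i 1) $ j)) = G i (x$i + t) * (\<Prod>j\<in>UNIV-{i}. G j (x $ j))" for t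
    by (subst prod.remove[of UNIV i]) (auto simp: axis_def intro!: prod.cong)
  have e2: "(\<Prod>j\<in>UNIV. (if j = i then deriv (G j) else G j) (x $ j)) = deriv (G i) (x$i) * (\<Prod>j\<in>UNIV-{i}. G j (x $ j))"
    by (subst prod.remove[of UNIV i]) (auto intro!: prod.cong)
  have "(G i has_field_derivative deriv (G i) (x$i)) (at (x$i))"
    using assms by (simp add: DERIV_deriv_iff_field_differentiable)
  then have "((\<lambda>s. G i (x$i + s)) has_field_derivative deriv (G i) (x$i)) (at 0)"
    by (simp add: DERIV_shift0)
  then have "((\<lambda>s. c * (G i (x$i + s) * (\<Prod>j\<in>UNIV-{i}. G j (x $ j)))) has_field_derivative
       c * (deriv (G i) (x$i) * (\<Prod>j\<in>UNIV-{i}. G j (x $ j)))) (at 0)"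
    by (intro DERIV_cmult DERIV_cmult_right)
  then show ?thesis by (simp only: e1 e2)
qed

lemma count_Cons_if: "count_list (i # js) j = (if i = j then Suc (count_list js j) else count_list js j)"
  by simp

lemma pdiffs_prod:
  fixes f :: "'n::finite \<Rightarrow> real \<Rightarrow> real"
  assumes D: "\<And>j n t. n < S \<Longrightarrow> (deriv ^^ n) (f j) field_differentiable (at t)"
  shows "length js \<le> S \<Longrightarrow> pdiffs js (\<lambda>x. c * (\<Prod>j\<in>UNIV. f j (x$j)))
           = (\<lambda>x. c * (\<Prod>j\<in>UNIV. (deriv ^^ count_list js j) (f j) (x$j)))"
proof (induction js)
  case Nil
  then show ?case by simp
next
  case (Cons i js)
  then have len: "length js < S" by simp
  have "pdiffs (i # js) (\<lambda>x. c * (\<Prod>j\<in>UNIV. f j (x$j))) x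
      = c * (\<Prod>j\<in>UNIV. (deriv ^^ count_list (i # js) j) (f j) (x$j))" for x
  proof -
    define G where "G j = (deriv ^^ count_list js j) (f j)" for j
    have "pdiffs (i # js) (\<lambda>x. c * (\<Prod>j\<in>UNIV. f j (x$j))) x
        = pdiff i (\<lambda>x. c * (\<Prod>j\<in>UNIV. G j (x$j))) x"
      using Cons by (simp add: G_def)
    also have "\<dots> = c * (\<Prod>j\<in>UNIV. (if j = i then deriv (G j) else G j) (x $ j))"
      unfolding pdiff_def
    proof (rule DERIV_imp_deriv[OF pdiff_prod_line])
      have "count_list js i < S" using count_le_length[of js i] len by simp
      then show "G i field_differentiable (at (x $ i))" unfolding G_def by (rule D)
    qed
    also have "\<dots> = c * (\<Prod>j\<in>UNIV. (deriv ^^ count_list (i # js) j) (f j) (x$j))"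
      by (intro arg_cong[where f="\<lambda>y. c * y"] prod.cong) (auto simp: G_def)
    finally show ?thesis .
  qed
  then show ?case by auto
qed

lemma prod_Ck:
  fixes f :: "'n::finite \<Rightarrow> real \<Rightarrow> real"
  assumes D: "\<And>j n t. n < S \<Longrightarrow> (deriv ^^ n) (f j) field_differentiable (at t)"
    and Cont: "\<And>j n. n \<le> S \<Longrightarrow> continuous_on UNIV ((deriv ^^ n) (f j))"
  shows "Ck_on UNIV S (\<lambda>x. c * (\<Prod>j\<in>UNIV. f j (x$j)))"
  unfolding Ck_on_def
proof (intro conjI allI impI ballI)
  fix js :: "'n list" and i x assume len: "length js < S"
  have "((\<lambda>t. c * (\<Prod>j\<in>UNIV. (deriv ^^ count_list js j) (f j) ((x + t *\<^sub>R axis i 1) $ j))) has_field_derivative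
          c * (\<Prod>j\<in>UNIV. (if j = i then deriv ((deriv ^^ count_list js j) (f j)) else (deriv ^^ count_list js j) (f j)) (x $ j))) (at 0)"
  proof (rule pdiff_prod_line)
    have "count_list js i < S" using count_le_length[of js i] len by simp
    then show "(deriv ^^ count_list js i) (f i) field_differentiable (at (x $ i))" by (rule D)
  qed
  then show "(\<lambda>t. pdiffs js (\<lambda>x. c * (\<Prod>j\<in>UNIV. f j (x $ j))) (x + t *\<^sub>R axis i 1)) field_differentiable (at 0)"
    using pdiffs_prod[OF D, where js=js and c=c] len unfolding field_differentiable_def by auto
next
  fix js :: "'n list" assume len: "length js \<le> S"
  have "continuous_on UNIV (\<lambda>x::real^'n. c * (\<Prod>j\<in>UNIV. (deriv ^^ count_list js j) (f j) (x$j)))"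
  proof (intro continuous_intros)
    fix j :: 'n
    have "count_list js j \<le> S" using count_le_length[of js j] len by simp
    then have "continuous_on UNIV ((deriv ^^ count_list js j) (f j))" by (rule Cont)
    then show "continuous_on UNIV (\<lambda>x::real^'n. (deriv ^^ count_list js j) (f j) (x $ j))"
      by (rule continuous_on_compose2[where t=UNIV]) (auto intro: continuous_intros)
  qed
  then show "continuous_on UNIV (pdiffs js (\<lambda>x. c * (\<Prod>j\<in>UNIV. f j (x $ j))))"
    using pdiffs_prod[OF D len] by simp
qed

section \<open>One dimension\<close>

lemma deriv_affine_pow:
  fixes g :: "real \<Rightarrow> real" and a c :: real
  assumes D: "\<And>n t. n < S \<Longrightarrow> (deriv ^^ n) g field_differentiable (at t)"
  shows "n \<le> S \<Longrightarrow> (deriv ^^ n) (\<lambda>s. g (a * s - c)) = (\<lambda>s. a ^ n * (deriv ^^ n) g (a * s - c))"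
proof (induction n)
  case 0
  then show ?case by simp
next
  case (Suc n)
  then have n: "n < S" by simp
  have "deriv (\<lambda>s. a ^ n * (deriv ^^ n) g (a * s - c)) s = a ^ Suc n * (deriv ^^ Suc n) g (a * s - c)" for s
  proof -
    have "((deriv ^^ n) g has_field_derivative deriv ((deriv ^^ n) g) (a * s - c)) (at (a * s - c))"
      using D[OF n] by (simp add: DERIV_deriv_iff_field_differentiable)
    moreover have "((\<lambda>s. a * s - c) has_field_derivative a) (at s)"
      by (auto intro!: derivative_eq_intros)
    ultimately have "((\<lambda>s. (deriv ^^ n) g (a * s - c)) has_field_derivative deriv ((deriv ^^ n) g) (a * s - c) * a) (at s)"
      by (rule DERIV_chain2)
    then have "((\<lambda>s. a ^ n * (deriv ^^ n) g (a * s - c)) has_field_derivative a ^ n * (deriv ((deriv ^^ n) g) (a * s - c) * a)) (at s)"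
      by (rule DERIV_cmult)
    then show ?thesis by (simp add: DERIV_imp_deriv)
  qed
  then show ?case using Suc by auto
qed

lemma affine_D:
  fixes g :: "real \<Rightarrow> real" and a c :: real
  assumes D: "\<And>n t. n < S \<Longrightarrow> (deriv ^^ n) g field_differentiable (at t)"
    and n: "n < S"
  shows "(deriv ^^ n) (\<lambda>s. g (a * s - c)) field_differentiable (at t)"
proof -
  have "((deriv ^^ n) g has_field_derivative deriv ((deriv ^^ n) g) (a * t - c)) (at (a * t - c))"
    using D[OF n] by (simp add: DERIV_deriv_iff_field_differentiable)
  moreover have "((\<lambda>s. a * s - c) has_field_derivative a) (at t)"
    by (auto intro!: derivative_eq_intros)
  ultimately have "((\<lambda>s. (deriv ^^ n) g (a * s - c)) has_field_derivative deriv ((deriv ^^ n) g) (a * t - c) * a) (at t)"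
    by (rule DERIV_chain2)
  then have "((\<lambda>s. a ^ n * (deriv ^^ n) g (a * s - c)) has_field_derivative a ^ n * (deriv ((deriv ^^ n) g) (a * t - c) * a)) (at t)"
    by (rule DERIV_cmult)
  then show ?thesis using deriv_affine_pow[OF D, where n=n and a=a and c=c] n unfolding field_differentiable_def by auto
qed

lemma affine_C:
  fixes g :: "real \<Rightarrow> real" and a c :: real
  assumes D: "\<And>n t. n < S \<Longrightarrow> (deriv ^^ n) g field_differentiable (at t)"
    and Cg: "\<And>n. n \<le> S \<Longrightarrow> continuous_on UNIV ((deriv ^^ n) g)"
    and n: "n \<le> S"
  shows "continuous_on UNIV ((deriv ^^ n) (\<lambda>s. g (a * s - c)))"
proof -
  have "continuous_on UNIV (\<lambda>s. a ^ n * (deriv ^^ n) g (a * s - c))"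
    by (intro continuous_intros continuous_on_compose2[OF Cg[OF n]]) auto
  then show ?thesis using deriv_affine_pow[OF D n] by simp
qed

lemma C1d_D: "C1d S g \<Longrightarrow> n < S \<Longrightarrow> (deriv ^^ n) g field_differentiable (at t)"
  unfolding C1d_def by blast

lemma C1d_C: "C1d S g \<Longrightarrow> n \<le> S \<Longrightarrow> continuous_on UNIV ((deriv ^^ n) g)"
  unfolding C1d_def
  by (cases "n = S") (auto intro!: continuous_at_imp_continuous_on field_differentiable_imp_continuous_at)

lemma deriv_zero_outside:
  fixes g :: "real \<Rightarrow> real"
  assumes "\<And>t. N < \<bar>t\<bar> \<Longrightarrow> g t = 0"
  shows "N < \<bar>t\<bar> \<Longrightarrow> (deriv ^^ n) g t = 0"
proof (induction n arbitrary: t)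
  case 0
  then show ?case using assms by simp
next
  case (Suc n)
  have "((\<lambda>_. 0) has_field_derivative 0) (at t)" by simp
  then have "((deriv ^^ n) g has_field_derivative 0) (at t)"
    by (rule has_field_derivative_transform_within_open[where S="{t. N < \<bar>t\<bar>}"])
       (use Suc in \<open>auto intro!: open_Collect_less continuous_intros\<close>)
  then show ?case by (simp add: DERIV_imp_deriv)
qed

lemma deriv_bounded:
  fixes g :: "real \<Rightarrow> real"
  assumes z: "\<And>t. N < \<bar>t\<bar> \<Longrightarrow> g t = 0" and C: "continuous_on UNIV ((deriv ^^ n) g)"
  shows "\<exists>B. \<forall>t. \<bar>(deriv ^^ n) g t\<bar> \<le> B"
proof -
  have "compact ((deriv ^^ n) g ` {-N..N})"
    by (rule compact_continuous_image[OF continuous_on_subset[OF C] compact_Icc]) auto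
  then obtain B where B: "\<And>y. y \<in> (deriv ^^ n) g ` {-N..N} \<Longrightarrow> norm y \<le> B"
    using compact_imp_bounded bounded_iff by metis
  have "\<bar>(deriv ^^ n) g t\<bar> \<le> max B 0" for t
  proof (cases "N < \<bar>t\<bar>")
    case True
    then show ?thesis using deriv_zero_outside[OF z True] by simp
  next
    case False
    then have "t \<in> {-N..N}" by auto
    then show ?thesis using B[of "(deriv ^^ n) g t"] by fastforce
  qed
  then show ?thesis by blast
qed

lemma card_box:
  fixes lo :: "'n::finite \<Rightarrow> int" and L :: nat
  shows "finite {(\<epsilon>::'n\<Rightarrow>bool, m::'n\<Rightarrow>int). \<forall>j. lo j \<le> m j \<and> m j \<le> lo j + L}
     \<and> card {(\<epsilon>::'n\<Rightarrow>bool, m::'n\<Rightarrow>int). \<forall>j. lo j \<le> m j \<and> m j \<le> lo j + L} \<le> 2 ^ CARD('n) * (L + 1) ^ CARD('n)"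
proof -
  let ?P = "PiE UNIV (\<lambda>j. {lo j .. lo j + L})"
  have sub: "{(\<epsilon>::'n\<Rightarrow>bool, m::'n\<Rightarrow>int). \<forall>j. lo j \<le> m j \<and> m j \<le> lo j + L} \<subseteq> PiE (UNIV::'n set) (\<lambda>_. UNIV::bool set) \<times> ?P"
    by (auto simp: PiE_UNIV_domain)
  have fU: "finite (UNIV::'n set)" by simp
  have f1: "finite ?P" by (rule finite_PiE[OF fU]) auto
  have f2: "finite (PiE (UNIV::'n set) (\<lambda>_. UNIV::bool set))" by (rule finite_PiE[OF fU]) auto
  have fin: "finite (PiE (UNIV::'n set) (\<lambda>_. UNIV::bool set) \<times> ?P)"
    using f1 f2 by blast
  have "card (PiE (UNIV::'n set) (\<lambda>_. UNIV::bool set) \<times> ?P) = 2 ^ CARD('n) * (L + 1) ^ CARD('n)"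
  proof -
    have c1: "card (PiE (UNIV::'n set) (\<lambda>_. UNIV::bool set)) = 2 ^ CARD('n)"
      by (subst card_PiE[OF fU]) (simp add: prod_constant)
    have nn: "nat (int L + 1) = Suc L" by (metis Suc_as_int nat_int)
    have c2: "card ?P = (L + 1) ^ CARD('n)"
      by (subst card_PiE[OF fU]) (simp add: prod_constant nn)
    show ?thesis by (simp only: card_cartesian_product c1 c2)
  qed
  then show ?thesis using card_mono[OF fin sub] finite_subset[OF sub fin] by simp
qed

definition gsel :: "(real\<Rightarrow>real) \<Rightarrow> (real\<Rightarrow>real) \<Rightarrow> ('n \<Rightarrow> bool) \<Rightarrow> 'n \<Rightarrow> real \<Rightarrow> real" where
  "gsel \<phi> \<psi> \<epsilon> j = (if \<epsilon> j then \<psi> else \<phi>)"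

lemma cwav_eq:
  "(\<lambda>x. c * wav \<phi> \<psi> k \<epsilon> m x) = (\<lambda>x::real^'n::finite. (c * 2 powr (real CARD('n) * real k / 2)) *
      (\<Prod>j\<in>UNIV. (\<lambda>s. gsel \<phi> \<psi> \<epsilon> j (2 ^ k * s - of_int (m j))) (x$j)))"
  by (simp add: wav_def tensor_gen_def gsel_def mult.assoc)

lemma bound_upto:
  assumes "\<And>n. n \<le> (K::nat) \<Longrightarrow> \<exists>B. \<forall>t. \<bar>h n t\<bar> \<le> (B::real)"
  shows "\<exists>B\<ge>1. \<forall>n\<le>K. \<forall>t. \<bar>h n t\<bar> \<le> B"
  using assms
proof (induction K)
  case 0
  then obtain B where "\<forall>t. \<bar>h 0 t\<bar> \<le> B" by blast
  then show ?case by (intro exI[of _ "max B 1"]) (simp add: le_max_iff_disj)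
next
  case (Suc K)
  then obtain B where B: "B \<ge> 1" "\<forall>n\<le>K. \<forall>t. \<bar>h n t\<bar> \<le> B" by force
  obtain B' where "\<forall>t. \<bar>h (Suc K) t\<bar> \<le> B'" using Suc.prems by blast
  then show ?case using B
    by (intro exI[of _ "max B B'"]) (auto simp: le_Suc_eq le_max_iff_disj)
qed

context
  fixes \<phi> \<psi> :: "real \<Rightarrow> real" and S N :: nat
  assumes C\<phi>: "C1d S \<phi>" and C\<psi>: "C1d S \<psi>"
    and z\<phi>: "\<And>t::real. real N < \<bar>t\<bar> \<Longrightarrow> \<phi> t = 0" and z\<psi>: "\<And>t::real. real N < \<bar>t\<bar> \<Longrightarrow> \<psi> t = 0"
begin

lemma gsel_D: "n < S \<Longrightarrow> (deriv ^^ n) (gsel \<phi> \<psi> \<epsilon> j) field_differentiable (at t)"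
  using C1d_D[OF C\<phi>] C1d_D[OF C\<psi>] by (simp add: gsel_def)

lemma gsel_C: "n \<le> S \<Longrightarrow> continuous_on UNIV ((deriv ^^ n) (gsel \<phi> \<psi> \<epsilon> j))"
  using C1d_C[OF C\<phi>] C1d_C[OF C\<psi>] by (simp add: gsel_def)

lemma gsel_z: "real N < \<bar>t::real\<bar> \<Longrightarrow> (deriv ^^ n) (gsel \<phi> \<psi> \<epsilon> j) t = 0"
  using deriv_zero_outside[OF z\<phi>] deriv_zero_outside[OF z\<psi>] by (simp add: gsel_def)

lemma f_D: "n < S \<Longrightarrow> (deriv ^^ n) (\<lambda>s. gsel \<phi> \<psi> \<epsilon> j (a * s - c)) field_differentiable (at t)"
  by (rule affine_D[OF gsel_D])

lemma f_C: "n \<le> S \<Longrightarrow> continuous_on UNIV ((deriv ^^ n) (\<lambda>s. gsel \<phi> \<psi> \<epsilon> j (a * s - c)))"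
  by (rule affine_C[OF gsel_D gsel_C])

lemma f_pow:
  assumes "n \<le> S"
  shows "(deriv ^^ n) (\<lambda>s. gsel \<phi> \<psi> \<epsilon> j (a * s - c)) t = a ^ n * (deriv ^^ n) (gsel \<phi> \<psi> \<epsilon> j) (a * t - c)"
proof -
  have "(deriv ^^ n) (\<lambda>s. gsel \<phi> \<psi> \<epsilon> j (a * s - c)) = (\<lambda>s. a ^ n * (deriv ^^ n) (gsel \<phi> \<psi> \<epsilon> j) (a * s - c))"
    by (rule deriv_affine_pow[where S=S, OF gsel_D]) (use assms in auto)
  then show ?thesis by simp
qed

lemma Ck_mono: "Ck_on U S f \<Longrightarrow> b \<le> S \<Longrightarrow> Ck_on U b f"
  unfolding Ck_on_def by auto

lemma cwav_Ck: "b \<le> S \<Longrightarrow> Ck_on UNIV b (\<lambda>x::real^'n::finite. c * wav \<phi> \<psi> k \<epsilon> m x)"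
  unfolding cwav_eq by (rule Ck_mono[OF prod_Ck[OF f_D f_C]])

lemma cwav_pdiffs:
  fixes x :: "real^'n::finite"
  assumes "length js \<le> S"
  shows "pdiffs js (\<lambda>x. c * wav \<phi> \<psi> k \<epsilon> m x) x = (c * 2 powr (real CARD('n) * real k / 2)) *
      (\<Prod>j\<in>UNIV. (2 ^ k) ^ count_list js j * (deriv ^^ count_list js j) (gsel \<phi> \<psi> \<epsilon> j) (2 ^ k * x$j - of_int (m j)))"
proof -
  have cl: "count_list js j \<le> S" for j using count_le_length[of js j] assms by simp
  define f where "f j = (\<lambda>s. gsel \<phi> \<psi> \<epsilon> j (2 ^ k * s - of_int (m j)))" for j
  have e1: "(\<lambda>x. c * wav \<phi> \<psi> k \<epsilon> m x) = (\<lambda>x::real^'n. (c * 2 powr (real CARD('n) * real k / 2)) * (\<Prod>j\<in>UNIV. f j (x$j)))"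
    by (simp add: cwav_eq f_def)
  have D: "\<And>j n t. n < S \<Longrightarrow> (deriv ^^ n) (f j) field_differentiable (at t)"
    unfolding f_def by (rule f_D)
  have e3: "(deriv ^^ count_list js j) (f j) (x$j) = (2 ^ k) ^ count_list js j * (deriv ^^ count_list js j) (gsel \<phi> \<psi> \<epsilon> j) (2 ^ k * x$j - of_int (m j))" for j
    unfolding f_def by (rule f_pow[OF cl])
  have e2: "pdiffs js (\<lambda>x. (c * 2 powr (real CARD('n) * real k / 2)) * (\<Prod>j\<in>UNIV. f j (x$j)))
     = (\<lambda>x. (c * 2 powr (real CARD('n) * real k / 2)) * (\<Prod>j\<in>UNIV. (deriv ^^ count_list js j) (f j) (x$j)))"
    by (rule pdiffs_prod[OF D assms])
  show ?thesis
    unfolding e1 e2 e3 by simp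
qed

lemma cwav_zero:
  fixes x :: "real^'n::finite"
  assumes "length js \<le> S" and "N < \<bar>2 ^ k * x$j - of_int (m j)\<bar>"
  shows "pdiffs js (\<lambda>x. c * wav \<phi> \<psi> k \<epsilon> m x) x = 0"
proof -
  have "(deriv ^^ count_list js j) (gsel \<phi> \<psi> \<epsilon> j) (2 ^ k * x$j - of_int (m j)) = 0"
    by (rule gsel_z[OF assms(2)])
  then show ?thesis
    unfolding cwav_pdiffs[OF assms(1)] by (auto intro!: prod_zero bexI[of _ j])
qed

lemma cwav_bnd:
  fixes x :: "real^'n::finite"
  assumes len: "length js \<le> S" and B: "\<forall>n\<le>S. \<forall>t. \<bar>(deriv ^^ n) \<phi> t\<bar> \<le> B \<and> \<bar>(deriv ^^ n) \<psi> t\<bar> \<le> B"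
  shows "\<bar>pdiffs js (\<lambda>x. c * wav \<phi> \<psi> k \<epsilon> m x) x\<bar> \<le> \<bar>c\<bar> * 2 powr (real CARD('n) * real k / 2) * 2 ^ (k * length js) * B ^ CARD('n)"
proof -
  have cl: "count_list js j \<le> S" for j using count_le_length[of js j] len by simp
  have gB: "\<bar>(deriv ^^ count_list js j) (gsel \<phi> \<psi> \<epsilon> j) t\<bar> \<le> B" for j t
    using B cl[of j] by (auto simp: gsel_def)
  have "\<bar>\<Prod>j\<in>UNIV. (2 ^ k) ^ count_list js j * (deriv ^^ count_list js j) (gsel \<phi> \<psi> \<epsilon> j) (2 ^ k * x$j - of_int (m j))\<bar>
      = (\<Prod>j\<in>UNIV. (2 ^ k) ^ count_list js j) * (\<Prod>j\<in>UNIV. \<bar>(deriv ^^ count_list js j) (gsel \<phi> \<psi> \<epsilon> j) (2 ^ k * x$j - of_int (m j))\<bar>)"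
    by (simp add: abs_prod prod.distrib abs_mult)
  also have "(\<Prod>j\<in>UNIV. ((2::real) ^ k) ^ count_list js j) = 2 ^ (k * length js)"
    by (simp add: power_sum[symmetric] sum_count_set power_mult)
  also have "(\<Prod>j\<in>UNIV. \<bar>(deriv ^^ count_list js j) (gsel \<phi> \<psi> \<epsilon> j) (2 ^ k * x$j - of_int (m j))\<bar>) \<le> (\<Prod>j\<in>(UNIV::'n set). B)"
    by (rule prod_mono) (use gB in auto)
  finally have "\<bar>\<Prod>j\<in>UNIV. (2 ^ k) ^ count_list js j * (deriv ^^ count_list js j) (gsel \<phi> \<psi> \<epsilon> j) (2 ^ k * x$j - of_int (m j))\<bar>
      \<le> 2 ^ (k * length js) * B ^ CARD('n)"
    by (simp add: prod_constant)
  then show ?thesis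
    unfolding cwav_pdiffs[OF len] abs_mult
    by (simp add: mult.assoc mult_left_mono)
qed

end

context
  fixes \<phi> \<psi> :: "real \<Rightarrow> real" and S N :: nat
  assumes C\<phi>: "C1d S \<phi>" and C\<psi>: "C1d S \<psi>"
    and z\<phi>: "\<And>t::real. real N < \<bar>t\<bar> \<Longrightarrow> \<phi> t = 0" and z\<psi>: "\<And>t::real. real N < \<bar>t\<bar> \<Longrightarrow> \<psi> t = 0"
begin

lemma wav_nz_box:
  fixes x :: "real^'n::finite"
  assumes "wav \<phi> \<psi> k \<epsilon> m x \<noteq> 0"
  shows "\<bar>2 ^ k * x$j - of_int (m j)\<bar> \<le> real N"
proof (rule ccontr)
  assume "\<not> ?thesis"
  then have "N < \<bar>2 ^ k * x$j - of_int (m j)\<bar>" by simp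
  from cwav_zero[OF C\<phi> C\<psi> z\<phi> z\<psi>, where js="[]" and k=k and x=x and j=j and m=m and c=1 and \<epsilon>=\<epsilon>] this
  have "wav \<phi> \<psi> k \<epsilon> m x = 0" by simp
  with assms show False by simp
qed

lemma closure_box:
  fixes y :: "real^'n::finite"
  assumes "y \<in> closure {x. wav \<phi> \<psi> k \<epsilon> m x \<noteq> 0}"
  shows "\<bar>2 ^ k * y$j - of_int (m j)\<bar> \<le> real N"
proof -
  have cl: "closed {x::real^'n. \<bar>2 ^ k * x$j - of_int (m j)\<bar> \<le> real N}"
    by (intro closed_Collect_le continuous_intros)
  have "{x. wav \<phi> \<psi> k \<epsilon> m x \<noteq> 0} \<subseteq> {x::real^'n. \<bar>2 ^ k * x$j - of_int (m j)\<bar> \<le> real N}"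
    using wav_nz_box by blast
  then have "closure {x. wav \<phi> \<psi> k \<epsilon> m x \<noteq> 0} \<subseteq> {x::real^'n. \<bar>2 ^ k * x$j - of_int (m j)\<bar> \<le> real N}"
    by (rule closure_minimal[OF _ cl])
  then show ?thesis using assms by blast
qed

lemma W_box:
  fixes Dom :: "(real^'n::finite) set"
  assumes Dbnd: "\<And>x j. x \<in> Dom \<Longrightarrow> \<bar>x$j\<bar> \<le> real D"
    and a: "(\<epsilon>, m) \<in> wav_index Dom \<phi> \<psi> (Suc k)"
  shows "- int (2 ^ k * D + N) \<le> m j \<and> m j \<le> - int (2 ^ k * D + N) + int (2 * (2 ^ k * D + N))"
proof -
  from a obtain y where y: "y \<in> closure {x. wav \<phi> \<psi> k \<epsilon> m x \<noteq> 0}" "y \<in> Dom"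
    unfolding wav_index_def by auto
  have h1: "\<bar>2 ^ k * y$j - of_int (m j)\<bar> \<le> real N" using closure_box[OF y(1)] .
  have h2: "\<bar>y$j\<bar> \<le> real D" using Dbnd[OF y(2)] .
  have "\<bar>2 ^ k * y$j\<bar> \<le> 2 ^ k * real D" using h2 by (simp add: abs_mult)
  then have "\<bar>real_of_int (m j)\<bar> \<le> 2 ^ k * real D + real N" using h1 by linarith
  moreover have e: "real_of_int (int (2 ^ k * D + N)) = 2 ^ k * real D + real N" by simp
  ultimately have "real_of_int \<bar>m j\<bar> \<le> real_of_int (int (2 ^ k * D + N))" by simp
  then have "\<bar>m j\<bar> \<le> int (2 ^ k * D + N)" by (simp only: of_int_le_iff)
  moreover have "int (2 * (2 ^ k * D + N)) = 2 * int (2 ^ k * D + N)" by simp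
  moreover have "\<And>R::int. \<bar>m j\<bar> \<le> R \<Longrightarrow> - R \<le> m j \<and> m j \<le> - R + 2 * R" by auto
  ultimately show ?thesis by metis
qed

lemma pw_aux: "(2::nat) ^ d * (2 ^ k * X) ^ d = (2 * X) ^ d * 2 ^ (d * k)"
  by (simp add: power_mult_distrib power_mult[symmetric] mult.commute)

lemma le1_aux: "2 * ((2::nat) ^ k * D + N) + 1 \<le> 2 ^ k * (2 * D + 2 * N + 1)"
proof -
  have "(1::nat) \<le> 2 ^ k" by simp
  then have "1 * (2 * N + 1) \<le> 2 ^ k * (2 * N + 1)" by (rule mult_le_mono1)
  then show ?thesis by (simp add: algebra_simps)
qed

lemma W_fin_card:
  fixes Dom :: "(real^'n::finite) set"
  assumes Dbnd: "\<And>x j. x \<in> Dom \<Longrightarrow> \<bar>x$j\<bar> \<le> real D"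
  shows "finite (wav_index Dom \<phi> \<psi> (Suc k)) \<and>
     card (wav_index Dom \<phi> \<psi> (Suc k)) \<le> (2 * (2 * D + 2 * N + 1)) ^ CARD('n) * 2 ^ (CARD('n) * k)"
proof -
  let ?R = "2 ^ k * D + N"
  let ?B = "{(\<epsilon>::'n\<Rightarrow>bool, m::'n\<Rightarrow>int). \<forall>j. (\<lambda>_. - int ?R) j \<le> m j \<and> m j \<le> (\<lambda>_. - int ?R) j + int (2 * ?R)}"
  have sub: "wav_index Dom \<phi> \<psi> (Suc k) \<subseteq> ?B"
  proof (rule subsetI)
    fix a assume a: "a \<in> wav_index Dom \<phi> \<psi> (Suc k)"
    obtain \<epsilon> m where am: "a = (\<epsilon>, m)" by (cases a)
    have "\<forall>j. - int ?R \<le> m j \<and> m j \<le> - int ?R + int (2 * ?R)"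
      using W_box[OF Dbnd] a am by blast
    then show "a \<in> ?B" unfolding am by simp
  qed
  note cb = card_box[of "(\<lambda>_. - int ?R) :: 'n \<Rightarrow> int" "2 * ?R"]
  have fB: "finite ?B" using cb by blast
  have "card (wav_index Dom \<phi> \<psi> (Suc k)) \<le> card ?B" by (rule card_mono[OF fB sub])
  also have "card ?B \<le> 2 ^ CARD('n) * (2 * ?R + 1) ^ CARD('n)" using cb by blast
  also have "\<dots> \<le> 2 ^ CARD('n) * (2 ^ k * (2 * D + 2 * N + 1)) ^ CARD('n)"
    by (intro mult_le_mono2 power_mono le1_aux) simp
  also have "\<dots> = (2 * (2 * D + 2 * N + 1)) ^ CARD('n) * 2 ^ (CARD('n) * k)"
    by (rule pw_aux)
  finally show ?thesis using finite_subset[OF sub fB] by blast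
qed

lemma Z_card:
  fixes x :: "real^'n::finite"
  shows "finite {(\<epsilon>::'n\<Rightarrow>bool, m::'n\<Rightarrow>int). \<forall>j. \<bar>2 ^ k * x$j - of_int (m j)\<bar> \<le> real N}
    \<and> card {(\<epsilon>::'n\<Rightarrow>bool, m::'n\<Rightarrow>int). \<forall>j. \<bar>2 ^ k * x$j - of_int (m j)\<bar> \<le> real N} \<le> 2 ^ CARD('n) * (2 * N + 1) ^ CARD('n)"
proof -
  let ?lo = "\<lambda>j. \<lfloor>2 ^ k * x$j\<rfloor> - int N"
  have sub: "{(\<epsilon>::'n\<Rightarrow>bool, m::'n\<Rightarrow>int). \<forall>j. \<bar>2 ^ k * x$j - of_int (m j)\<bar> \<le> real N}
     \<subseteq> {(\<epsilon>::'n\<Rightarrow>bool, m::'n\<Rightarrow>int). \<forall>j. ?lo j \<le> m j \<and> m j \<le> ?lo j + int (2 * N)}"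
  proof (clarify)
    fix \<epsilon> :: "'n \<Rightarrow> bool" and m :: "'n \<Rightarrow> int" and j
    assume "\<forall>j. \<bar>2 ^ k * x$j - of_int (m j)\<bar> \<le> real N"
    then have h: "\<bar>2 ^ k * x$j - of_int (m j)\<bar> \<le> real N" by blast
    have f1: "of_int \<lfloor>2 ^ k * x$j\<rfloor> \<le> 2 ^ k * x$j" "2 ^ k * x$j < of_int \<lfloor>2 ^ k * x$j\<rfloor> + 1"
      by linarith+
    have "\<lfloor>2 ^ k * x$j\<rfloor> - int N < m j + 1" using h f1 by linarith
    moreover have "m j < \<lfloor>2 ^ k * x$j\<rfloor> + int N + 1" using h f1 by linarith
    ultimately show "?lo j \<le> m j \<and> m j \<le> ?lo j + int (2 * N)" by linarith
  qed
  note cb = card_box[of ?lo "2 * N"]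
  show ?thesis using card_mono[OF conjunct1[OF cb] sub] conjunct2[OF cb] finite_subset[OF sub conjunct1[OF cb]]
    by simp
qed

end

lemma count_replicate: "count_list (replicate n a) i = (if a = i then n else 0)"
  by (induction n) auto

lemma exists_counts:
  fixes \<beta> :: "'a \<Rightarrow> nat"
  assumes "finite A"
  shows "\<exists>xs. set xs \<subseteq> A \<and> (\<forall>i\<in>A. count_list xs i = \<beta> i)"
  using assms
proof (induction A rule: finite_induct)
  case empty
  then show ?case by (intro exI[of _ "[]"]) simp
next
  case (insert a A)
  then obtain xs where xs: "set xs \<subseteq> A" "\<forall>i\<in>A. count_list xs i = \<beta> i" by blast
  have "count_list xs a = 0" using xs(1) insert(2) by (meson count_notin subsetD)
  then show ?case using xs insert(2)
    by (intro exI[of _ "replicate (\<beta> a) a @ xs"]) (auto simp: count_replicate)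
qed

lemma mlist_count: "count_list (mlist (\<beta> :: 'n::finite \<Rightarrow> nat)) i = \<beta> i"
proof -
  have "\<exists>xs. \<forall>i. count_list xs i = \<beta> i"
    using exists_counts[of "UNIV :: 'n set" \<beta>] by auto
  then have "\<forall>i. count_list (mlist \<beta>) i = \<beta> i"
    unfolding mlist_def by (rule someI_ex)
  then show ?thesis by blast
qed

lemma len_mlist: "length (mlist (\<beta> :: 'n::finite \<Rightarrow> nat)) = (\<Sum>i\<in>UNIV. \<beta> i)"
  using sum_count_set[of "mlist \<beta>" UNIV] by (simp add: mlist_count)

lemma Bset_fin_card:
  "finite {\<beta>::'n::finite\<Rightarrow>nat. (\<Sum>i\<in>UNIV. \<beta> i) \<le> b} \<and> card {\<beta>::'n::finite\<Rightarrow>nat. (\<Sum>i\<in>UNIV. \<beta> i) \<le> b} \<le> (b + 1) ^ CARD('n)"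
proof -
  have fU: "finite (UNIV::'n set)" by simp
  have sub: "{\<beta>::'n\<Rightarrow>nat. (\<Sum>i\<in>UNIV. \<beta> i) \<le> b} \<subseteq> PiE (UNIV::'n set) (\<lambda>_. {0..b})"
  proof
    fix \<beta> :: "'n \<Rightarrow> nat" assume "\<beta> \<in> {\<beta>. (\<Sum>i\<in>UNIV. \<beta> i) \<le> b}"
    then have "\<beta> i \<le> b" for i using member_le_sum[of i UNIV \<beta>] by auto
    then show "\<beta> \<in> PiE (UNIV::'n set) (\<lambda>_. {0..b})" by (auto simp: PiE_UNIV_domain)
  qed
  have fin: "finite (PiE (UNIV::'n set) (\<lambda>_. {0..b}))" by (rule finite_PiE[OF fU]) auto
  have "card (PiE (UNIV::'n set) (\<lambda>_. {0..b})) = (b + 1) ^ CARD('n)"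
    by (subst card_PiE[OF fU]) (simp add: prod_constant)
  then show ?thesis using card_mono[OF fin sub] finite_subset[OF sub fin] by simp
qed

lemma Cb_bound:
  fixes F :: "real^'n::finite \<Rightarrow> real"
  assumes C: "Ck_on UNIV b F" and K: "\<And>js x. length js \<le> b \<Longrightarrow> \<bar>pdiffs js F x\<bar> \<le> K" and K0: "K \<ge> 0"
  shows "Cb_norm b F \<le> ereal (real ((b + 1) ^ CARD('n)) * K)"
proof -
  let ?B = "{\<beta>::'n\<Rightarrow>nat. (\<Sum>i\<in>UNIV. \<beta> i) \<le> b}"
  have "(\<Sum>\<beta>\<in>?B. (SUP x. ereal \<bar>Dmulti \<beta> F x\<bar>)) \<le> (\<Sum>\<beta>\<in>?B. ereal K)"
  proof (rule sum_mono)
    fix \<beta> assume "\<beta> \<in> ?B"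
    then have "length (mlist \<beta>) \<le> b" by (simp add: len_mlist)
    then show "(SUP x. ereal \<bar>Dmulti \<beta> F x\<bar>) \<le> ereal K"
      by (intro SUP_least) (simp add: Dmulti_def K)
  qed
  also have "\<dots> = ereal (real (card ?B) * K)" by simp
  also have "\<dots> \<le> ereal (real ((b + 1) ^ CARD('n)) * K)"
  proof -
    have "card ?B \<le> (b + 1) ^ CARD('n)" using Bset_fin_card[of b, where 'n='n] by blast
    then have "real (card ?B) \<le> real ((b + 1) ^ CARD('n))" by (simp only: of_nat_le_iff)
    then show ?thesis using K0 by (simp only: ereal_less_eq) (rule mult_right_mono)
  qed
  finally show ?thesis using C unfolding Cb_norm_def by simp
qed

lemma expo:
  assumes "len \<le> b" "real b + real d + 1 \<le> real \<alpha>"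
  shows "2 powr ((real d / 2 - real \<alpha>) * real (Suc k)) * 2 powr (real d * real k / 2) * 2 ^ (k * len) \<le> (1/2::real) ^ k"
proof -
  define E where "E = (real d / 2 - real \<alpha>) * real (Suc k) + real d * real k / 2 + real k * real len"
  have l: "2 powr ((real d / 2 - real \<alpha>) * real (Suc k)) * 2 powr (real d * real k / 2) * 2 ^ (k * len) = 2 powr E"
    unfolding E_def by (simp add: powr_add powr_realpow[symmetric])
  have r: "(1/2::real) ^ k = 2 powr (- real k)"
    by (simp add: powr_minus powr_realpow power_one_over inverse_eq_divide)
  have p1: "real k * real len \<le> real k * real b" using assms(1) by (intro mult_left_mono) auto
  have p2: "real k * (real d - real \<alpha> + real b + 1) \<le> 0" using assms(2) by (intro mult_nonneg_nonpos) auto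
  have e: "E = real k * (real d - real \<alpha> + real b + 1) + (real k * real len - real k * real b) + (real d / 2 - real \<alpha>) - real k"
    unfolding E_def by (simp add: field_simps)
  have "E \<le> - real k" using p1 p2 assms(2) unfolding e by linarith
  then show ?thesis unfolding l r by simp
qed

definition cfc :: "real \<Rightarrow> (nat \<times> ('n::finite \<Rightarrow> bool) \<times> ('n \<Rightarrow> int) \<Rightarrow> real) \<Rightarrow> nat \<Rightarrow> ('n \<Rightarrow> bool) \<times> ('n \<Rightarrow> int) \<Rightarrow> real" where
  "cfc \<alpha> \<xi> k a = 2 powr ((real CARD('n) / 2 - \<alpha>) * real (Suc k)) * \<xi> (Suc k, fst a, snd a)"

definition ulev :: "real \<Rightarrow> (real^'n::finite) set \<Rightarrow> (real \<Rightarrow> real) \<Rightarrow> (real \<Rightarrow> real)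
    \<Rightarrow> (nat \<times> ('n \<Rightarrow> bool) \<times> ('n \<Rightarrow> int) \<Rightarrow> real) \<Rightarrow> nat \<Rightarrow> real^'n \<Rightarrow> real" where
  "ulev \<alpha> Dom \<phi> \<psi> \<xi> k = (\<lambda>x. \<Sum>a\<in>wav_index Dom \<phi> \<psi> (Suc k). cfc \<alpha> \<xi> k a * wav \<phi> \<psi> k (fst a) (snd a) x)"

lemma Ftilde_eq: "Ftilde \<alpha> Dom \<phi> \<psi> \<xi> = (\<lambda>x. \<Sum>k. ulev \<alpha> Dom \<phi> \<psi> \<xi> k x)"
  unfolding Ftilde_def ulev_def cfc_def split_def by (simp add: mult.assoc)

context
  fixes \<phi> \<psi> :: "real \<Rightarrow> real" and S N D b \<alpha> :: nat and B :: real and Dom :: "(real^'n::finite) set"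
  assumes C\<phi>: "C1d S \<phi>" and C\<psi>: "C1d S \<psi>"
    and z\<phi>: "\<And>t::real. real N < \<bar>t\<bar> \<Longrightarrow> \<phi> t = 0" and z\<psi>: "\<And>t::real. real N < \<bar>t\<bar> \<Longrightarrow> \<psi> t = 0"
    and Dbnd: "\<And>x j. x \<in> Dom \<Longrightarrow> \<bar>x$j\<bar> \<le> real D"
    and Bnd: "\<forall>n\<le>S. \<forall>t. \<bar>(deriv ^^ n) \<phi> t\<bar> \<le> B \<and> \<bar>(deriv ^^ n) \<psi> t\<bar> \<le> B"
    and B1: "B \<ge> 1" and bS: "b \<le> S" and b\<alpha>: "real b + real CARD('n) + 1 \<le> real \<alpha>"
begin

lemma finW: "finite (wav_index Dom \<phi> \<psi> (Suc k))"
  using W_fin_card[OF C\<phi> C\<psi> z\<phi> z\<psi> Dbnd] by blast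

lemma ulev_Ck: "Ck_on UNIV b (ulev (real \<alpha>) Dom \<phi> \<psi> \<xi> k)"
  unfolding ulev_def
  by (rule pdiffs_sum(2)[OF finW]) (rule cwav_Ck[OF C\<phi> C\<psi> z\<phi> z\<psi> bS])

lemma ulev_bnd:
  fixes x :: "real^'n"
  assumes \<xi>b: "\<forall>a\<in>wav_index Dom \<phi> \<psi> (Suc k). \<bar>\<xi> (Suc k, fst a, snd a)\<bar> \<le> T * (3/2) ^ k"
    and T0: "T \<ge> 0" and len: "length js \<le> b"
  shows "\<bar>pdiffs js (ulev (real \<alpha>) Dom \<phi> \<psi> \<xi> k) x\<bar>
      \<le> (2 ^ CARD('n) * (2 * real N + 1) ^ CARD('n) * B ^ CARD('n)) * T * (3/4) ^ k"
proof -
  let ?W = "wav_index Dom \<phi> \<psi> (Suc k)"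
  let ?Z = "{(\<epsilon>::'n\<Rightarrow>bool, m::'n\<Rightarrow>int). \<forall>j. \<bar>2 ^ k * x$j - of_int (m j)\<bar> \<le> real N}"
  define p where "p a = pdiffs js (\<lambda>x. cfc (real \<alpha>) \<xi> k a * wav \<phi> \<psi> k (fst a) (snd a) x) x" for a
  define Q where "Q = 2 powr ((real CARD('n) / 2 - real \<alpha>) * real (Suc k)) * (T * (3/2) ^ k)
        * 2 powr (real CARD('n) * real k / 2) * 2 ^ (k * length js) * B ^ CARD('n)"
  have lenS: "length js \<le> S" using len bS by simp
  have Zc: "finite ?Z" "card ?Z \<le> 2 ^ CARD('n) * (2 * N + 1) ^ CARD('n)"
    using Z_card[OF C\<phi> C\<psi> z\<phi> z\<psi>, where k=k and x=x] by blast+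
  have eq: "pdiffs js (ulev (real \<alpha>) Dom \<phi> \<psi> \<xi> k) x = (\<Sum>a\<in>?W. p a)"
  proof -
    have "pdiffs js (\<lambda>x. \<Sum>a\<in>?W. cfc (real \<alpha>) \<xi> k a * wav \<phi> \<psi> k (fst a) (snd a) x)
        = (\<lambda>x. \<Sum>a\<in>?W. pdiffs js (\<lambda>x. cfc (real \<alpha>) \<xi> k a * wav \<phi> \<psi> k (fst a) (snd a) x) x)"
      by (rule pdiffs_sum(1)[OF finW _ len]) (rule cwav_Ck[OF C\<phi> C\<psi> z\<phi> z\<psi> bS])
    then show ?thesis by (simp add: ulev_def p_def)
  qed
  have pz: "p a = 0" if "a \<notin> ?Z" for a
  proof -
    obtain \<epsilon> m where a: "a = (\<epsilon>, m)" by (cases a)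
    with that obtain j where j: "real N < \<bar>2 ^ k * x$j - of_int (m j)\<bar>" by (auto simp: not_le)
    have "pdiffs js (\<lambda>x. cfc (real \<alpha>) \<xi> k a * wav \<phi> \<psi> k \<epsilon> m x) x = 0"
      by (rule cwav_zero[where N=N and S=S and k=k and x=x and j=j and m=m, OF C\<phi> C\<psi> z\<phi> z\<psi> lenS]) (use j in auto)
    then show ?thesis unfolding p_def a by simp
  qed
  have pb: "\<bar>p a\<bar> \<le> Q" if a: "a \<in> ?W" for a
  proof -
    have "\<bar>p a\<bar> \<le> \<bar>cfc (real \<alpha>) \<xi> k a\<bar> * 2 powr (real CARD('n) * real k / 2) * 2 ^ (k * length js) * B ^ CARD('n)"
      unfolding p_def by (rule cwav_bnd[OF C\<phi> C\<psi> z\<phi> z\<psi> lenS Bnd])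
    also have "\<bar>cfc (real \<alpha>) \<xi> k a\<bar> \<le> 2 powr ((real CARD('n) / 2 - real \<alpha>) * real (Suc k)) * (T * (3/2) ^ k)"
      unfolding cfc_def abs_mult using \<xi>b a by (simp add: mult_left_mono)
    finally show ?thesis unfolding Q_def using B1
      by (simp add: mult_right_mono)
  qed
  have "\<bar>\<Sum>a\<in>?W. p a\<bar> \<le> (\<Sum>a\<in>?W. \<bar>p a\<bar>)" by (rule sum_abs)
  also have "(\<Sum>a\<in>?W. \<bar>p a\<bar>) = (\<Sum>a\<in>?W \<inter> ?Z. \<bar>p a\<bar>)"
    by (rule sum.mono_neutral_right[OF finW]) (use pz in auto)
  also have "\<dots> \<le> (\<Sum>a\<in>?W \<inter> ?Z. Q)"
    by (rule sum_mono) (use pb in auto)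
  also have "\<dots> = real (card (?W \<inter> ?Z)) * Q" by simp
  also have "\<dots> \<le> real (2 ^ CARD('n) * (2 * N + 1) ^ CARD('n)) * Q"
  proof (rule mult_right_mono)
    have "card (?W \<inter> ?Z) \<le> card ?Z" by (rule card_mono[OF Zc(1)]) auto
    then show "real (card (?W \<inter> ?Z)) \<le> real (2 ^ CARD('n) * (2 * N + 1) ^ CARD('n))"
      using Zc(2) by linarith
    show "0 \<le> Q" unfolding Q_def using T0 B1 by simp
  qed
  also have "Q \<le> (1/2) ^ k * (T * (3/2) ^ k) * B ^ CARD('n)"
  proof -
    have "2 powr ((real CARD('n) / 2 - real \<alpha>) * real (Suc k)) * 2 powr (real CARD('n) * real k / 2) * 2 ^ (k * length js) \<le> (1/2::real) ^ k"
      by (rule expo) (use len b\<alpha> in auto)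
    then have "(2 powr ((real CARD('n) / 2 - real \<alpha>) * real (Suc k)) * 2 powr (real CARD('n) * real k / 2) * 2 ^ (k * length js)) * ((T * (3/2) ^ k) * B ^ CARD('n))
        \<le> (1/2::real) ^ k * ((T * (3/2) ^ k) * B ^ CARD('n))"
      by (rule mult_right_mono) (use T0 B1 in simp)
    then show ?thesis unfolding Q_def by (simp add: mult_ac)
  qed
  finally have "\<bar>\<Sum>a\<in>?W. p a\<bar> \<le> real (2 ^ CARD('n) * (2 * N + 1) ^ CARD('n)) * ((1/2) ^ k * (T * (3/2) ^ k) * B ^ CARD('n))"
    by (simp add: mult_left_mono)
  also have "\<dots> = (2 ^ CARD('n) * (2 * real N + 1) ^ CARD('n) * B ^ CARD('n)) * T * (3/4) ^ k"
  proof -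
    have e2: "(3/4::real) ^ k = (1/2) ^ k * (3/2) ^ k" by (simp add: power_mult_distrib[symmetric])
    have e1: "real (2 ^ CARD('n) * (2 * N + 1) ^ CARD('n)) = 2 ^ CARD('n) * (2 * real N + 1) ^ CARD('n)"
      by (simp only: of_nat_mult of_nat_power of_nat_add of_nat_1 of_nat_numeral)
    show ?thesis unfolding e1 e2 by (simp only: ac_simps)
  qed
  finally show ?thesis using eq by simp
qed

lemma det_bound:
  assumes \<xi>b: "\<And>k. \<forall>a\<in>wav_index Dom \<phi> \<psi> (Suc k). \<bar>\<xi> (Suc k, fst a, snd a)\<bar> \<le> T * (3/2) ^ k"
    and T0: "T \<ge> 0"
  shows "Cb_norm b (Ftilde (real \<alpha>) Dom \<phi> \<psi> \<xi>)
     \<le> ereal (real ((b + 1) ^ CARD('n)) * ((2 ^ CARD('n) * (2 * real N + 1) ^ CARD('n) * B ^ CARD('n)) * T * 4))"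
proof -
  define K1 where "K1 = 2 ^ CARD('n) * (2 * real N + 1) ^ CARD('n) * B ^ CARD('n)"
  have K10: "K1 \<ge> 0" unfolding K1_def using B1 by simp
  define M where "M k = K1 * T * (3/4) ^ k" for k :: nat
  have bnd: "\<And>k (js::'n list) (x::real^'n). length js \<le> b \<Longrightarrow> \<bar>pdiffs js (ulev (real \<alpha>) Dom \<phi> \<psi> \<xi> k) x\<bar> \<le> M k"
    unfolding M_def K1_def by (rule ulev_bnd[OF \<xi>b T0])
  have sg: "summable (\<lambda>k. (3/4::real) ^ k)" by (rule summable_geometric) simp
  have sM: "summable M" unfolding M_def by (rule summable_mult[OF sg])
  have sum: "(\<Sum>k. M k) = K1 * T * 4"
    unfolding M_def using suminf_mult[OF sg, of "K1 * T"] suminf_geometric[of "3/4::real"] by simp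
  have C: "Ck_on UNIV b (\<lambda>x. \<Sum>k. ulev (real \<alpha>) Dom \<phi> \<psi> \<xi> k x)"
    by (rule pdiffs_series_Ck[OF ulev_Ck bnd sM])
  have K: "\<And>js x. length js \<le> b \<Longrightarrow> \<bar>pdiffs js (\<lambda>x. \<Sum>k. ulev (real \<alpha>) Dom \<phi> \<psi> \<xi> k x) x\<bar> \<le> K1 * T * 4"
    using pdiffs_series_bnd[OF ulev_Ck bnd sM] sum by simp
  have "Cb_norm b (\<lambda>x. \<Sum>k. ulev (real \<alpha>) Dom \<phi> \<psi> \<xi> k x) \<le> ereal (real ((b + 1) ^ CARD('n)) * (K1 * T * 4))"
    by (rule Cb_bound[OF C K]) (use K10 T0 in \<open>auto intro!: mult_nonneg_nonneg\<close>)
  then show ?thesis unfolding Ftilde_eq K1_def .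
qed

end

lemma lap_half_closed:
  fixes T :: real assumes "T \<ge> 0"
  shows "(\<integral>\<^sup>+x. ennreal (exp (- \<bar>x\<bar>) / 2) * indicator {T..} x \<partial>lborel) = ennreal (exp (-T) / 2)"
proof -
  have "(\<integral>\<^sup>+x. ennreal (exp (- \<bar>x\<bar>) / 2) * indicator {T..} x \<partial>lborel)
      = (\<integral>\<^sup>+x. ennreal (if x \<in> {T..} then exp (- x) / 2 else 0) \<partial>lborel)"
    using assms by (intro nn_integral_cong) (auto simp: indicator_def)
  also have "\<dots> = ennreal (exp (-T) / 2)"
  proof (rule nn_integral_has_integral_lborel)
    show "(\<lambda>x. if x \<in> {T..} then exp (- x) / 2 else 0) \<in> borel_measurable borel" by measurable
    show "\<And>x. 0 \<le> (if x \<in> {T..} then exp (- x) / 2 else (0::real))" by auto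
    have "((\<lambda>x::real. exp (-1*x) / 2) has_integral exp (-1*T)/1 / 2) {T..}"
      by (rule has_integral_divide[OF has_integral_exp_minus_to_infinity]) simp
    then show "((\<lambda>x. if x \<in> {T..} then exp (- x) / 2 else 0) has_integral exp (- T) / 2) UNIV"
      by (subst has_integral_restrict_UNIV) simp
  qed
  finally show ?thesis .
qed

lemma lap_half_open:
  fixes T :: real assumes "T \<ge> 0"
  shows "(\<integral>\<^sup>+x. ennreal (exp (- \<bar>x\<bar>) / 2) * indicator {T<..} x \<partial>lborel) = ennreal (exp (-T) / 2)"
proof -
  have "(\<integral>\<^sup>+x. ennreal (exp (- \<bar>x\<bar>) / 2) * indicator {T<..} x \<partial>lborel)
      = (\<integral>\<^sup>+x. ennreal (exp (- \<bar>x\<bar>) / 2) * indicator {T..} x \<partial>lborel)"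
  proof (rule nn_integral_cong_AE)
    have "AE x in lborel. x \<noteq> T" by (rule AE_lborel_singleton)
    then show "AE x in lborel. ennreal (exp (- \<bar>x\<bar>) / 2) * indicator {T<..} x = ennreal (exp (- \<bar>x\<bar>) / 2) * indicator {T..} x"
      by eventually_elim (auto simp: indicator_def)
  qed
  then show ?thesis using lap_half_closed[OF assms] by simp
qed

lemma lap_reflect:
  fixes A :: "real set" assumes [measurable]: "A \<in> sets borel"
  shows "(\<integral>\<^sup>+x. ennreal (exp (- \<bar>x\<bar>) / 2) * indicator A x \<partial>lborel)
       = (\<integral>\<^sup>+x. ennreal (exp (- \<bar>x\<bar>) / 2) * indicator (uminus ` A) x \<partial>lborel)"
proof -
  have "(\<integral>\<^sup>+x. ennreal (exp (- \<bar>x\<bar>) / 2) * indicator A x \<partial>lborel)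
     = ennreal \<bar>-1\<bar> * (\<integral>\<^sup>+x. ennreal (exp (- \<bar>0 + (-1) * x\<bar>) / 2) * indicator A (0 + (-1) * x) \<partial>lborel)"
    by (rule nn_integral_real_affine) auto
  also have "\<dots> = (\<integral>\<^sup>+x. ennreal (exp (- \<bar>x\<bar>) / 2) * indicator (uminus ` A) x \<partial>lborel)"
  proof -
    have "x \<in> uminus ` A \<longleftrightarrow> - x \<in> A" for x
      by (metis add.inverse_inverse image_eqI imageE)
    then show ?thesis by (simp add: indicator_def)
  qed
  finally show ?thesis .
qed

lemma laplace_tail:
  fixes T :: real assumes "T \<ge> 0"
  shows "emeasure laplace {x. T < \<bar>x\<bar>} = ennreal (exp (-T))"
proof -
  have e: "emeasure laplace B = (\<integral>\<^sup>+x. ennreal (exp (- \<bar>x\<bar>) / 2) * indicator B x \<partial>lborel)"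
    if "B \<in> sets borel" for B
    unfolding laplace_def using that by (subst emeasure_density) auto
  have "emeasure laplace {x. T < \<bar>x\<bar>} = (\<integral>\<^sup>+x. ennreal (exp (- \<bar>x\<bar>) / 2) * indicator {x. T < \<bar>x\<bar>} x \<partial>lborel)"
    by (rule e) measurable
  also have "\<dots> = (\<integral>\<^sup>+x. ennreal (exp (- \<bar>x\<bar>) / 2) * indicator {T<..} x
       + ennreal (exp (- \<bar>x\<bar>) / 2) * indicator {..<-T} x \<partial>lborel)"
  proof (rule nn_integral_cong)
    fix x :: real
    show "ennreal (exp (- \<bar>x\<bar>) / 2) * indicator {x. T < \<bar>x\<bar>} x = ennreal (exp (- \<bar>x\<bar>) / 2) * indicator {T<..} x
       + ennreal (exp (- \<bar>x\<bar>) / 2) * indicator {..<-T} x"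
      using assms by (cases "T < x"; cases "x < -T") (auto simp: indicator_def)
  qed
  also have "\<dots> = (\<integral>\<^sup>+x. ennreal (exp (- \<bar>x\<bar>) / 2) * indicator {T<..} x \<partial>lborel)
      + (\<integral>\<^sup>+x. ennreal (exp (- \<bar>x\<bar>) / 2) * indicator {..<-T} x \<partial>lborel)"
    by (rule nn_integral_add) auto
  also have "(\<integral>\<^sup>+x. ennreal (exp (- \<bar>x\<bar>) / 2) * indicator {..<-T} x \<partial>lborel)
      = (\<integral>\<^sup>+x. ennreal (exp (- \<bar>x\<bar>) / 2) * indicator {T<..} x \<partial>lborel)"
  proof -
    have "uminus ` {..<-T} = {T<..}"
      by (auto simp: image_iff intro!: exI[of _ "- _"])
    then show ?thesis using lap_reflect[of "{..<-T}"] by simp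
  qed
  also have "(\<integral>\<^sup>+x. ennreal (exp (- \<bar>x\<bar>) / 2) * indicator {T<..} x \<partial>lborel)
      + (\<integral>\<^sup>+x. ennreal (exp (- \<bar>x\<bar>) / 2) * indicator {T<..} x \<partial>lborel)
      = ennreal (exp (-T) / 2) + ennreal (exp (-T) / 2)"
    using lap_half_open[OF assms] by simp
  also have "\<dots> = ennreal (exp (-T))"
    by (subst ennreal_plus[symmetric]) auto
  finally show ?thesis .
qed

lemma prob_space_laplace: "prob_space laplace"
proof
  have e: "emeasure laplace B = (\<integral>\<^sup>+x. ennreal (exp (- \<bar>x\<bar>) / 2) * indicator B x \<partial>lborel)"
    if "B \<in> sets borel" for B
    unfolding laplace_def using that by (subst emeasure_density) auto
  have "emeasure laplace UNIV = (\<integral>\<^sup>+x. ennreal (exp (- \<bar>x\<bar>) / 2) * indicator {x. 0 < \<bar>x\<bar>} x \<partial>lborel)"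
  proof (subst e)
    show "(\<integral>\<^sup>+ x. ennreal (exp (- \<bar>x\<bar>) / 2) * indicator UNIV x \<partial>lborel) =
          (\<integral>\<^sup>+ x. ennreal (exp (- \<bar>x\<bar>) / 2) * indicator {x. 0 < \<bar>x\<bar>} x \<partial>lborel)"
    proof (rule nn_integral_cong_AE)
      have "AE x in lborel. x \<noteq> 0" by (rule AE_lborel_singleton)
      then show "AE x in lborel. ennreal (exp (- \<bar>x\<bar>) / 2) * indicator UNIV x = ennreal (exp (- \<bar>x\<bar>) / 2) * indicator {x. 0 < \<bar>x\<bar>} x"
        by eventually_elim (auto simp: indicator_def)
    qed
  qed auto
  also have "\<dots> = emeasure laplace {x. 0 < \<bar>x\<bar>}" by (subst e) auto
  also have "\<dots> = 1" using laplace_tail[of 0] by simp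
  moreover have "space laplace = UNIV" by (simp add: laplace_def)
  ultimately show "emeasure laplace (space laplace) = 1" by simp
qed

lemma bern: "1 + real k / 2 \<le> (3/2::real) ^ k"
proof (induction k)
  case 0
  then show ?case by simp
next
  case (Suc k)
  have "1 + real (Suc k) / 2 \<le> 3/2 * (1 + real k / 2)" by simp
  also have "\<dots> \<le> 3/2 * (3/2) ^ k" using Suc by simp
  finally show ?case by simp
qed

lemma two_pow_exp: "(2::real) ^ (d+1) \<le> exp (real (d+1))"
proof -
  have "(2::real) \<le> exp 1" using exp_ge_add_one_self[of 1] by simp
  then have "(2::real) ^ (d+1) \<le> exp 1 ^ (d+1)" by (rule power_mono) simp
  also have "\<dots> = exp (real (d+1))" using exp_of_nat_mult[of "d+1" "1::real"] by simp
  finally show ?thesis .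
qed

lemma tailk:
  fixes T K2 c :: real and d k :: nat
  assumes T: "T \<ge> 2 * (real d + 1)" and c: "c \<le> K2 * 2 ^ (d * k)" and c0: "0 \<le> c" and K2: "K2 \<ge> 0"
  shows "c * exp (- T * (3/2) ^ k) \<le> K2 * exp (- T) * (1/2) ^ k"
proof -
  have T0: "T \<ge> 0" using T by simp
  have "T * (1 + real k / 2) \<le> T * (3/2) ^ k" using bern[of k] T0 by (rule mult_left_mono)
  then have "exp (- T * (3/2) ^ k) \<le> exp (- T * (1 + real k / 2))" by simp
  also have "\<dots> = exp (- T) * exp (- T / 2) ^ k"
  proof -
    have "- T * (1 + real k / 2) = - T + real k * (- T / 2)" by (simp add: algebra_simps)
    then show ?thesis by (simp only: exp_add exp_of_nat_mult)
  qed
  finally have e1: "exp (- T * (3/2) ^ k) \<le> exp (- T) * exp (- T / 2) ^ k" .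
  have h: "2 ^ d * exp (- T / 2) \<le> 1/2"
  proof -
    have "exp (real (d+1)) \<le> exp (T/2)" using T by simp
    with two_pow_exp[of d] have "2 ^ (d+1) \<le> exp (T/2)" by linarith
    then have "2 ^ (d+1) * exp (- T / 2) \<le> exp (T/2) * exp (- T / 2)" by (rule mult_right_mono) simp
    also have "exp (T/2) * exp (- T / 2) = 1" by (simp flip: exp_add)
    finally show ?thesis by simp
  qed
  have "c * exp (- T * (3/2) ^ k) \<le> (K2 * 2 ^ (d * k)) * (exp (- T) * exp (- T / 2) ^ k)"
    by (rule mult_mono[OF c e1]) (use K2 c0 in auto)
  also have "\<dots> = K2 * exp (- T) * (2 ^ d * exp (- T / 2)) ^ k"
    by (simp add: power_mult power_mult_distrib mult_ac)
  also have "\<dots> \<le> K2 * exp (- T) * (1/2) ^ k"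
    by (rule mult_left_mono[OF power_mono[OF h]]) (use K2 in auto)
  finally show ?thesis .
qed

theorem lemma6p2:
  fixes Dom :: "(real^'n::finite) set"
    and \<phi> \<psi> :: "real \<Rightarrow> real"
    and \<alpha> b S :: nat
  assumes "Dom \<noteq> {}" and "open Dom" and "bounded Dom" and "smooth_boundary Dom"
    and "cs_wavelet_basis S \<phi> \<psi> TYPE('n)" and "S > \<alpha>"
    and "\<alpha> > 1 + CARD('n)"
    and "1 \<le> b" and "b + CARD('n) < \<alpha>"
  shows "\<exists>c1 c2::real. c1 > 0 \<and> c2 > 0 \<and>
           (\<forall>r::real. r > 0 \<longrightarrow>
              (\<exists>A\<in>sets (coef_law Dom \<phi> \<psi>).
                 {\<xi>\<in>space (coef_law Dom \<phi> \<psi>). Cb_norm b (Ftilde (real \<alpha>) Dom \<phi> \<psi> \<xi>) \<ge> ereal r} \<subseteq> A \<and>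
                 measure (coef_law Dom \<phi> \<psi>) A \<le> c1 * exp (- c2 * r)))"
proof -
  let ?d = "CARD('n)"
  let ?I = "coef_index Dom \<phi> \<psi>"
  let ?M = "coef_law Dom \<phi> \<psi>"
  from assms(5) have b\<phi>: "bounded {t. \<phi> t \<noteq> 0}" and b\<psi>: "bounded {t. \<psi> t \<noteq> 0}"
    and C\<phi>: "C1d S \<phi>" and C\<psi>: "C1d S \<psi>"
    unfolding cs_wavelet_basis_def by auto
  obtain a\<phi> where a\<phi>: "\<forall>t\<in>{t. \<phi> t \<noteq> 0}. norm t \<le> a\<phi>" using b\<phi> bounded_iff by blast
  obtain a\<psi> where a\<psi>: "\<forall>t\<in>{t. \<psi> t \<noteq> 0}. norm t \<le> a\<psi>" using b\<psi> bounded_iff by blast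
  define N where "N = nat \<lceil>max a\<phi> a\<psi>\<rceil>"
  have Nge: "max a\<phi> a\<psi> \<le> real N" unfolding N_def by (rule real_nat_ceiling_ge)
  have z\<phi>: "\<phi> t = 0" if "real N < \<bar>t\<bar>" for t :: real
    using a\<phi> Nge that by force
  have z\<psi>: "\<psi> t = 0" if "real N < \<bar>t\<bar>" for t :: real
    using a\<psi> Nge that by force
  obtain aD where aD: "\<forall>x\<in>Dom. norm x \<le> aD" using assms(3) bounded_iff by blast
  define D where "D = nat \<lceil>aD\<rceil>"
  have Dge: "aD \<le> real D" unfolding D_def by (rule real_nat_ceiling_ge)
  have Dbnd: "\<bar>x$j\<bar> \<le> real D" if "x \<in> Dom" for x :: "real^'n" and j
    using component_le_norm_cart[of x j] aD that Dge by force
  have "\<exists>B\<ge>1. \<forall>n\<le>S. \<forall>t. \<bar>\<bar>(deriv ^^ n) \<phi> t\<bar> + \<bar>(deriv ^^ n) \<psi> t\<bar>\<bar> \<le> B"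
  proof (rule bound_upto)
    fix n assume n: "n \<le> S"
    obtain B1 where B1: "\<forall>t. \<bar>(deriv ^^ n) \<phi> t\<bar> \<le> B1"
      using deriv_bounded[OF z\<phi> C1d_C[OF C\<phi> n]] by blast
    obtain B2 where B2: "\<forall>t. \<bar>(deriv ^^ n) \<psi> t\<bar> \<le> B2"
      using deriv_bounded[OF z\<psi> C1d_C[OF C\<psi> n]] by blast
    show "\<exists>B. \<forall>t. \<bar>\<bar>(deriv ^^ n) \<phi> t\<bar> + \<bar>(deriv ^^ n) \<psi> t\<bar>\<bar> \<le> B"
      using B1 B2 by (intro exI[of _ "B1 + B2"]) (auto intro: add_mono)
  qed
  then obtain B where B1: "B \<ge> 1" and Bs: "\<forall>n\<le>S. \<forall>t. \<bar>\<bar>(deriv ^^ n) \<phi> t\<bar> + \<bar>(deriv ^^ n) \<psi> t\<bar>\<bar> \<le> B"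
    by blast
  have Bnd: "\<forall>n\<le>S. \<forall>t. \<bar>(deriv ^^ n) \<phi> t\<bar> \<le> B \<and> \<bar>(deriv ^^ n) \<psi> t\<bar> \<le> B"
  proof (intro allI impI conjI)
    fix n t assume "n \<le> S"
    then have "\<bar>\<bar>(deriv ^^ n) \<phi> t\<bar> + \<bar>(deriv ^^ n) \<psi> t\<bar>\<bar> \<le> B" using Bs by blast
    then show "\<bar>(deriv ^^ n) \<phi> t\<bar> \<le> B" "\<bar>(deriv ^^ n) \<psi> t\<bar> \<le> B" by linarith+
  qed
  have bS: "b \<le> S" using assms(6,9) by linarith
  have b\<alpha>: "real b + real ?d + 1 \<le> real \<alpha>" using assms(9) by linarith
  define K1 where "K1 = 2 ^ ?d * (2 * real N + 1) ^ ?d * B ^ ?d"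
  define CB where "CB = real ((b + 1) ^ ?d)"
  have K11: "K1 \<ge> 1"
  proof -
    have "(1::real) * 1 * 1 \<le> 2 ^ ?d * (2 * real N + 1) ^ ?d * B ^ ?d"
      by (intro mult_mono one_le_power) (use B1 in auto)
    then show ?thesis unfolding K1_def by simp
  qed
  have CB1: "CB \<ge> 1" unfolding CB_def by simp
  define \<rho> where "\<rho> = 1 / (8 * CB * K1)"
  have \<rho>0: "\<rho> > 0" unfolding \<rho>_def using K11 CB1 by simp
  define K2 where "K2 = real ((2 * (2 * D + 2 * N + 1)) ^ ?d)"
  have K20: "K2 \<ge> 0" unfolding K2_def by simp
  define r0 where "r0 = 2 * (real ?d + 1) / \<rho>"
  define c1 where "c1 = max (2 * K2) (exp (\<rho> * r0))"
  have c10: "c1 > 0" unfolding c1_def by (simp add: less_max_iff_disj)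
  have PS: "prob_space ?M"
    unfolding coef_law_def by (rule prob_space_PiM) (rule prob_space_laplace)
  interpret P: product_prob_space "\<lambda>_. laplace" ?I
    unfolding product_prob_space_def product_prob_space_axioms_def product_sigma_finite_def
    using prob_space_laplace prob_space_imp_sigma_finite by blast
  have Mdef: "?M = PiM ?I (\<lambda>_. laplace)" unfolding coef_law_def ..
  have sets_lap: "sets laplace = sets borel" unfolding laplace_def by simp
  have space_lap: "space laplace = UNIV" unfolding laplace_def by simp
  show ?thesis
  proof (rule exI[of _ c1], rule exI[of _ \<rho>], intro conjI allI impI c10 \<rho>0)
    fix r :: real assume r: "r > 0"
    show "\<exists>A\<in>sets ?M. {\<xi>\<in>space ?M. Cb_norm b (Ftilde (real \<alpha>) Dom \<phi> \<psi> \<xi>) \<ge> ereal r} \<subseteq> A \<and>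
                 measure ?M A \<le> c1 * exp (- \<rho> * r)"
    proof (cases "r < r0")
      case True
      have "measure ?M (space ?M) = 1" using prob_space.prob_space[OF PS] .
      also have "1 \<le> exp (\<rho> * r0) * exp (- \<rho> * r)"
      proof -
        have "0 \<le> \<rho> * r0 + - \<rho> * r" using True \<rho>0 by (simp add: algebra_simps)
        then have "1 \<le> exp (\<rho> * r0 + - \<rho> * r)" by simp
        also have "exp (\<rho> * r0 + - \<rho> * r) = exp (\<rho> * r0) * exp (- \<rho> * r)" by (rule exp_add)
        finally show ?thesis .
      qed
      also have "\<dots> \<le> c1 * exp (- \<rho> * r)" unfolding c1_def by (intro mult_right_mono) auto
      finally show ?thesis by (intro bexI[of _ "space ?M"]) auto
    next
      case False
      define T where "T = \<rho> * r"
      have T0: "T \<ge> 0" unfolding T_def using \<rho>0 r by simp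
      have Tge: "T \<ge> 2 * (real ?d + 1)"
      proof -
        have "\<rho> * r0 \<le> \<rho> * r" using False \<rho>0 by (intro mult_left_mono) auto
        moreover have "\<rho> * r0 = 2 * (real ?d + 1)" unfolding r0_def using \<rho>0 by simp
        ultimately show ?thesis unfolding T_def by simp
      qed
      define F where "F k a = {\<xi>\<in>space ?M. T * (3/2) ^ k < \<bar>\<xi> (Suc k, fst a, snd a)\<bar>}"
        for k :: nat and a :: "('n \<Rightarrow> bool) \<times> ('n \<Rightarrow> int)"
      define E where "E k = (\<Union>a\<in>wav_index Dom \<phi> \<psi> (Suc k). F k a)" for k
      define A where "A = (\<Union>k. E k)"
      have finW: "finite (wav_index Dom \<phi> \<psi> (Suc k))"
        and cardW: "card (wav_index Dom \<phi> \<psi> (Suc k)) \<le> (2 * (2 * D + 2 * N + 1)) ^ ?d * 2 ^ (?d * k)" for k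
      proof -
        have "finite (wav_index Dom \<phi> \<psi> (Suc k)) \<and> card (wav_index Dom \<phi> \<psi> (Suc k)) \<le> (2 * (2 * D + 2 * N + 1)) ^ ?d * 2 ^ (?d * k)"
          by (rule W_fin_card[where N=N and S=S and D=D and Dom=Dom and k=k, OF C\<phi> C\<psi> _ _ _]) (auto intro: z\<phi> z\<psi> Dbnd)
        then show "finite (wav_index Dom \<phi> \<psi> (Suc k))" "card (wav_index Dom \<phi> \<psi> (Suc k)) \<le> (2 * (2 * D + 2 * N + 1)) ^ ?d * 2 ^ (?d * k)"
          by blast+
      qed
      have inI: "(Suc k, fst a, snd a) \<in> ?I" if "a \<in> wav_index Dom \<phi> \<psi> (Suc k)" for k a
        using that unfolding coef_index_def by auto
      have Feq: "F k a = {\<xi>\<in>space (PiM ?I (\<lambda>_. laplace)). \<xi> (Suc k, fst a, snd a) \<in> {x. T * (3/2) ^ k < \<bar>x\<bar>}}" for k a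
        unfolding F_def Mdef by simp
      have Fsets: "F k a \<in> sets ?M" if "a \<in> wav_index Dom \<phi> \<psi> (Suc k)" for k a
        unfolding Feq Mdef
        by (rule sets_Collect_single'[OF inI[OF that]]) (simp add: sets_lap space_lap)
      have Fmeas: "emeasure ?M (F k a) = ennreal (exp (- (T * (3/2) ^ k)))" if "a \<in> wav_index Dom \<phi> \<psi> (Suc k)" for k a
      proof -
        have "emeasure ?M (F k a) = emeasure laplace {x. T * (3/2) ^ k < \<bar>x\<bar>}"
          unfolding Feq Mdef
          by (rule P.emeasure_PiM_Collect_single[OF inI[OF that]]) (simp add: sets_lap)
        also have "\<dots> = ennreal (exp (- (T * (3/2) ^ k)))"
          by (rule laplace_tail) (use T0 in simp)
        finally show ?thesis .
      qed
      have Esets: "E k \<in> sets ?M" for k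
        unfolding E_def by (rule sets.finite_UN[OF finW]) (rule Fsets)
      have Ebnd: "emeasure ?M (E k) \<le> ennreal (K2 * exp (- T) * (1/2) ^ k)" for k
      proof -
        have "emeasure ?M (E k) \<le> (\<Sum>a\<in>wav_index Dom \<phi> \<psi> (Suc k). emeasure ?M (F k a))"
          unfolding E_def by (rule emeasure_subadditive_finite[OF finW]) (use Fsets in auto)
        also have "\<dots> = (\<Sum>a\<in>wav_index Dom \<phi> \<psi> (Suc k). ennreal (exp (- (T * (3/2) ^ k))))"
          by (rule sum.cong) (auto simp: Fmeas)
        also have "\<dots> = ennreal (real (card (wav_index Dom \<phi> \<psi> (Suc k))) * exp (- (T * (3/2) ^ k)))"
          by (simp add: ennreal_mult ennreal_of_nat_eq_real_of_nat)
        also have "\<dots> \<le> ennreal (K2 * exp (- T) * (1/2) ^ k)"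
        proof (rule ennreal_leI)
          have "real (card (wav_index Dom \<phi> \<psi> (Suc k))) \<le> real ((2 * (2 * D + 2 * N + 1)) ^ ?d * 2 ^ (?d * k))"
            using cardW[of k] by (simp only: of_nat_le_iff)
          then have "real (card (wav_index Dom \<phi> \<psi> (Suc k))) \<le> K2 * 2 ^ (?d * k)"
            unfolding K2_def by simp
          from tailk[OF Tge this _ K20]
          show "real (card (wav_index Dom \<phi> \<psi> (Suc k))) * exp (- (T * (3/2) ^ k)) \<le> K2 * exp (- T) * (1/2) ^ k"
            by simp
        qed
        finally show ?thesis .
      qed
      have Asets: "A \<in> sets ?M" unfolding A_def using Esets by auto
      have sg: "summable (\<lambda>k. (1/2::real) ^ k)" by (rule summable_geometric) simp
      have sb: "summable (\<lambda>k. K2 * exp (- T) * (1/2::real) ^ k)" by (rule summable_mult[OF sg])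
      have "emeasure ?M A \<le> (\<Sum>k. emeasure ?M (E k))"
        unfolding A_def by (rule emeasure_subadditive_countably) (use Esets in auto)
      also have "\<dots> \<le> (\<Sum>k. ennreal (K2 * exp (- T) * (1/2) ^ k))"
        by (rule suminf_le[OF Ebnd summableI summableI])
      also have "\<dots> = ennreal (\<Sum>k. K2 * exp (- T) * (1/2) ^ k)"
        by (rule suminf_ennreal2[OF _ sb]) (use K20 in simp)
      also have "(\<Sum>k. K2 * exp (- T) * (1/2::real) ^ k) = 2 * K2 * exp (- T)"
        using suminf_mult[OF sg, of "K2 * exp (- T)"] suminf_geometric[of "1/2::real"] by simp
      finally have eA: "emeasure ?M A \<le> ennreal (2 * K2 * exp (- T))" .
      have mA: "measure ?M A \<le> 2 * K2 * exp (- T)"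
      proof -
        have "emeasure ?M A = ennreal (measure ?M A)" unfolding Mdef by (rule P.emeasure_eq_measure)
        then show ?thesis using eA K20 by (simp add: ennreal_le_iff)
      qed
      have "2 * K2 * exp (- T) \<le> c1 * exp (- T)"
        unfolding c1_def by (intro mult_right_mono) auto
      moreover have "exp (- T) = exp (- \<rho> * r)" unfolding T_def by simp
      ultimately have "2 * K2 * exp (- T) \<le> c1 * exp (- \<rho> * r)" by simp
      with mA have meas: "measure ?M A \<le> c1 * exp (- \<rho> * r)" by linarith
      have incl: "{\<xi>\<in>space ?M. Cb_norm b (Ftilde (real \<alpha>) Dom \<phi> \<psi> \<xi>) \<ge> ereal r} \<subseteq> A"
      proof
        fix \<xi> assume "\<xi> \<in> {\<xi>\<in>space ?M. Cb_norm b (Ftilde (real \<alpha>) Dom \<phi> \<psi> \<xi>) \<ge> ereal r}"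
        then have sp: "\<xi> \<in> space ?M" and ge: "ereal r \<le> Cb_norm b (Ftilde (real \<alpha>) Dom \<phi> \<psi> \<xi>)" by auto
        show "\<xi> \<in> A"
        proof (rule ccontr)
          assume "\<xi> \<notin> A"
          then have xb: "\<forall>a\<in>wav_index Dom \<phi> \<psi> (Suc k). \<bar>\<xi> (Suc k, fst a, snd a)\<bar> \<le> T * (3/2) ^ k" for k
            using sp unfolding A_def E_def F_def by (auto simp: not_less)
          have "Cb_norm b (Ftilde (real \<alpha>) Dom \<phi> \<psi> \<xi>) \<le> ereal (CB * (K1 * T * 4))"
            unfolding CB_def K1_def
            by (rule det_bound[where N=N and D=D and S=S and B=B and Dom=Dom and b=b and \<alpha>=\<alpha>, OF C\<phi> C\<psi> _ _ _ Bnd B1 bS b\<alpha> xb T0])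
               (auto intro: z\<phi> z\<psi> Dbnd)
          also have "CB * (K1 * T * 4) = r / 2"
            unfolding T_def \<rho>_def using K11 CB1 by (simp add: field_simps)
          finally have "ereal r \<le> ereal (r / 2)" using ge by (rule order_trans[rotated])
          then show False using r by simp
        qed
      qed
      show ?thesis using Asets incl meas by blast
    qed
  qed
qed

end
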